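(* Let $X$ be an infinite dimensional Banach lattice and let $(e_k)$ denote the canonical unit vectors of sequence spaces. (i) For every $m\in\mathbb N$ and all pairwise disjointly supported sequences $u_1,\dots,u_m\in X_U$, $$\Big\|\sum_{k=1}^m u_k\Big\|_{X_U}\le\Big\|\sum_{k=1}^m\|u_k\|_{X_U}e_k\Big\|_{X_U}.$$ (ii) For every $m\in\mathbb N$ and all pairwise disjointly supported sequences $u_1,\dots,u_m\in X_L$, $$\Big\|\sum_{k=1}^m\|u_k\|_{X_L}e_k\Big\|_{X_L}\le\Big\|\sum_{k=1}^m u_k\Big\|_{X_L}.$$
   Context: Banach lattices are real. For a Banach lattice $X$ and $n\in\mathbb N$, $\mathfrak B_n(X)$ is the set of $n$-tuples of pairwise disjoint ($|x_i|\wedge|x_j|=0$) norm-one elements. For $a\in\mathbb R^n$: $\|a\|_{X_U(n)}:=\sup\{\|\sum_{i=1}^n a_ix_i\|_X:(x_i)\in\mathfrak B_n(X)\}$; $\Phi_n(a):=\inf\{\|\sum_{i=1}^n a_ix_i\|_X:(x_i)\in\mathfrak B_n(X)\}$; $\|a\|_{X_L(n)}:=\inf\{\sum_{k\in F}\Phi_n(a^k): F\text{ finite}, a^k\in\mathbb R^n, a=\sum_{k\in F}a^k\}$. $X_U$ (resp. $X_L$) is the space of real sequences $a$ with $\|a\|_{X_U}:=\sup_n\|(a_i)_{i=1}^n\|_{X_U(n)}<\infty$ (resp. $\|a\|_{X_L}:=\sup_n\|(a_i)_{i=1}^n\|_{X_L(n)}<\infty$). *)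

theory Defs
  imports "HOL-Analysis.Analysis"
begin

text \<open>A real Banach lattice is modelled as a type 'a which is a real Banach space,
  an ordered real vector space and a lattice (for the same order), i.e. a Riesz space,
  whose norm is a lattice norm.\<close>

definition lat_abs :: "'a::{ordered_real_vector, lattice} \<Rightarrow> 'a" where
  "lat_abs x = sup x (- x)"

definition banach_lattice :: "'a::{banach, ordered_real_vector, lattice} itself \<Rightarrow> bool" where
  "banach_lattice T \<longleftrightarrow>
     (\<forall>x y::'a. lat_abs x \<le> lat_abs y \<longrightarrow> norm x \<le> norm y)"

definition infinite_dimensional :: "'a::real_vector itself \<Rightarrow> bool" where
  "infinite_dimensional T \<longleftrightarrow> \<not> (\<exists>B::'a set. finite B \<and> span B = UNIV)"

definition lat_disjoint :: "'a::{ordered_real_vector, lattice} \<Rightarrow> 'a \<Rightarrow> bool" where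
  "lat_disjoint x y \<longleftrightarrow> inf (lat_abs x) (lat_abs y) = 0"

definition disj_tuples :: "'a::{banach, ordered_real_vector, lattice} itself \<Rightarrow> nat \<Rightarrow> (nat \<Rightarrow> 'a) set" where
  "disj_tuples T n = {x. (\<forall>i<n. norm (x i) = 1) \<and>
                        (\<forall>i<n. \<forall>j<n. i \<noteq> j \<longrightarrow> lat_disjoint (x i) (x j))}"

definition XU_n :: "'a::{banach, ordered_real_vector, lattice} itself \<Rightarrow> nat \<Rightarrow> (nat \<Rightarrow> real) \<Rightarrow> ereal" where
  "XU_n T n a = (SUP x\<in>disj_tuples T n. ereal (norm (\<Sum>i<n. a i *\<^sub>R x i)))"

definition Phi_n :: "'a::{banach, ordered_real_vector, lattice} itself \<Rightarrow> nat \<Rightarrow> (nat \<Rightarrow> real) \<Rightarrow> ereal" where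
  "Phi_n T n a = (INF x\<in>disj_tuples T n. ereal (norm (\<Sum>i<n. a i *\<^sub>R x i)))"

definition XL_n :: "'a::{banach, ordered_real_vector, lattice} itself \<Rightarrow> nat \<Rightarrow> (nat \<Rightarrow> real) \<Rightarrow> ereal" where
  "XL_n T n a = Inf {(\<Sum>k<K. Phi_n T n (b k)) | K (b :: nat \<Rightarrow> nat \<Rightarrow> real).
                      \<forall>i<n. a i = (\<Sum>k<K. b k i)}"

definition XU_norm :: "'a::{banach, ordered_real_vector, lattice} itself \<Rightarrow> (nat \<Rightarrow> real) \<Rightarrow> ereal" where
  "XU_norm T a = (SUP n. XU_n T n a)"

definition XL_norm :: "'a::{banach, ordered_real_vector, lattice} itself \<Rightarrow> (nat \<Rightarrow> real) \<Rightarrow> ereal" where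
  "XL_norm T a = (SUP n. XL_n T n a)"

definition XU :: "'a::{banach, ordered_real_vector, lattice} itself \<Rightarrow> (nat \<Rightarrow> real) set" where
  "XU T = {a. XU_norm T a < \<infinity>}"

definition XL :: "'a::{banach, ordered_real_vector, lattice} itself \<Rightarrow> (nat \<Rightarrow> real) set" where
  "XL T = {a. XL_norm T a < \<infinity>}"

definition unit_vec :: "nat \<Rightarrow> nat \<Rightarrow> real" where
  "unit_vec k = (\<lambda>i. if i = k then 1 else 0)"

definition disj_supported :: "nat \<Rightarrow> (nat \<Rightarrow> nat \<Rightarrow> real) \<Rightarrow> bool" where
  "disj_supported m u \<longleftrightarrow> (\<forall>j<m. \<forall>k<m. j \<noteq> k \<longrightarrow> (\<forall>i. u j i = 0 \<or> u k i = 0))"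

end

theory Submission
  imports Defs "HOL-Library.Lattice_Algebras"
begin


interpretation rz: lattice_ab_group_add "(+)" "0::'a::{ordered_real_vector,lattice}" "(-)" uminus "(\<le>)" "(<)" inf sup
  by unfold_locales


lemma scaleR_sup_nonneg:
  fixes x y :: "'a::{ordered_real_vector,lattice}"
  assumes "0 \<le> c" shows "c *\<^sub>R sup x y = sup (c *\<^sub>R x) (c *\<^sub>R y)"
proof (cases "c = 0")
  case True then show ?thesis by simp
next
  case False
  then have c: "c > 0" using assms by simp
  show ?thesis
  proof (rule antisym)
    have "x \<le> inverse c *\<^sub>R sup (c *\<^sub>R x) (c *\<^sub>R y)"
      using scaleR_left_mono[of "c *\<^sub>R x" "sup (c *\<^sub>R x) (c *\<^sub>R y)" "inverse c"] c by simp
    moreover have "y \<le> inverse c *\<^sub>R sup (c *\<^sub>R x) (c *\<^sub>R y)"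
      using scaleR_left_mono[of "c *\<^sub>R y" "sup (c *\<^sub>R x) (c *\<^sub>R y)" "inverse c"] c by simp
    ultimately have "sup x y \<le> inverse c *\<^sub>R sup (c *\<^sub>R x) (c *\<^sub>R y)" by simp
    from scaleR_left_mono[OF this, of c] c
    show "c *\<^sub>R sup x y \<le> sup (c *\<^sub>R x) (c *\<^sub>R y)" by simp
  next
    show "sup (c *\<^sub>R x) (c *\<^sub>R y) \<le> c *\<^sub>R sup x y"
      using scaleR_left_mono[of x "sup x y" c] scaleR_left_mono[of y "sup x y" c] assms by simp
  qed
qed

lemma scaleR_inf_nonneg:
  fixes x y :: "'a::{ordered_real_vector,lattice}"
  assumes "0 \<le> c" shows "c *\<^sub>R inf x y = inf (c *\<^sub>R x) (c *\<^sub>R y)"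
proof -
  have "inf x y = - sup (-x) (-y)" by (rule rz.inf_eq_neg_sup)
  then have "c *\<^sub>R inf x y = - (c *\<^sub>R sup (-x) (-y))" by (simp only: scaleR_minus_right)
  also have "\<dots> = - sup (- (c *\<^sub>R x)) (- (c *\<^sub>R y))"
    using scaleR_sup_nonneg[OF assms, of "-x" "-y"] by (simp only: scaleR_minus_right)
  also have "\<dots> = inf (c *\<^sub>R x) (c *\<^sub>R y)" by (rule rz.inf_eq_neg_sup[symmetric])
  finally show ?thesis .
qed

lemma lat_abs_nonneg: "0 \<le> lat_abs (x::'a::{ordered_real_vector,lattice})"
proof -
  have "x + (-x) \<le> lat_abs x + lat_abs x"
    unfolding lat_abs_def by (intro add_mono sup_ge1 sup_ge2)
  then have "0 \<le> lat_abs x + lat_abs x" by simp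
  then show ?thesis by (rule rz.zero_le_double_add_iff_zero_le_single_add[THEN iffD1])
qed

lemma lat_abs_pos: "0 \<le> (x::'a::{ordered_real_vector,lattice}) \<Longrightarrow> lat_abs x = x"
proof -
  assume "0 \<le> x"
  then have "-x \<le> x" using order_trans[of "-x" 0 x] by simp
  then show ?thesis unfolding lat_abs_def by (rule sup_absorb1)
qed

lemma lat_abs_abs [simp]: "lat_abs (lat_abs (x::'a::{ordered_real_vector,lattice})) = lat_abs x"
  using lat_abs_pos lat_abs_nonneg by blast

lemma lat_abs_neg [simp]: "lat_abs (- (x::'a::{ordered_real_vector,lattice})) = lat_abs x"
  unfolding lat_abs_def by (simp add: sup_commute)

lemma lat_abs_zero [simp]: "lat_abs (0::'a::{ordered_real_vector,lattice}) = 0"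
  unfolding lat_abs_def by simp

lemma lat_abs_ge: "(x::'a::{ordered_real_vector,lattice}) \<le> lat_abs x" "- x \<le> lat_abs x"
  unfolding lat_abs_def by auto

lemma lat_abs_scale: "lat_abs (c *\<^sub>R (x::'a::{ordered_real_vector,lattice})) = \<bar>c\<bar> *\<^sub>R lat_abs x"
proof (cases "0 \<le> c")
  case True 
  have "lat_abs (c *\<^sub>R x) = sup (c *\<^sub>R x) (c *\<^sub>R (-x))" unfolding lat_abs_def by simp
  also have "\<dots> = c *\<^sub>R sup x (-x)" using scaleR_sup_nonneg[OF True, of x "-x"] by simp
  finally show ?thesis using True unfolding lat_abs_def by simp
next
  case False
  then have c: "0 \<le> -c" "\<bar>c\<bar> = -c" by auto
  have "lat_abs (c *\<^sub>R x) = sup ((-c) *\<^sub>R (-x)) ((-c) *\<^sub>R x)" unfolding lat_abs_def by simp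
  also have "\<dots> = (-c) *\<^sub>R sup (-x) x" using scaleR_sup_nonneg[OF c(1), of "-x" x] by simp
  also have "\<dots> = \<bar>c\<bar> *\<^sub>R lat_abs x" 
    unfolding lat_abs_def c(2) by (subst sup_commute) (rule refl)
  finally show ?thesis .
qed

lemma lat_abs_triangle: "lat_abs ((x::'a::{ordered_real_vector,lattice}) + y) \<le> lat_abs x + lat_abs y"
proof -
  have "x + y \<le> lat_abs x + lat_abs y" using lat_abs_ge by (intro add_mono)
  moreover have "- (x + y) \<le> lat_abs x + lat_abs y"
    using add_mono[OF lat_abs_ge(2)[of x] lat_abs_ge(2)[of y]] by simp
  ultimately show ?thesis unfolding lat_abs_def[of "x+y"] by simp
qed

lemma lat_abs_eq0: "lat_abs (x::'a::{ordered_real_vector,lattice}) = 0 \<longleftrightarrow> x = 0"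
  unfolding lat_abs_def by (rule rz.sup_0_eq_0)


definition ppart :: "'a::{ordered_real_vector,lattice} \<Rightarrow> 'a" where "ppart x = sup x 0"
definition npart :: "'a::{ordered_real_vector,lattice} \<Rightarrow> 'a" where "npart x = sup (-x) 0"

lemma ppart_nonneg: "0 \<le> ppart x" and npart_nonneg: "0 \<le> npart x"
  unfolding ppart_def npart_def by auto

lemma ppart_npart_diff: "ppart x - npart (x::'a::{ordered_real_vector,lattice}) = x"
proof -
  have "npart x = - inf x 0" unfolding npart_def using rz.neg_inf_eq_sup[of x 0] by simp
  then have "ppart x - npart x = sup x 0 + inf x 0" unfolding ppart_def by simp
  also have "\<dots> = x + 0" by (rule rz.add_eq_inf_sup[symmetric])
  finally show ?thesis by simp
qed

lemma npart_eq: "npart x = ppart x - (x::'a::{ordered_real_vector,lattice})"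
  using ppart_npart_diff[of x] by (simp add: algebra_simps)

lemma ppart_npart_inf: "inf (ppart x) (npart (x::'a::{ordered_real_vector,lattice})) = 0"
proof -
  have "inf (ppart x) (npart x) = inf (ppart x) (ppart x + - x)" using npart_eq[of x] by simp
  also have "\<dots> = ppart x + inf 0 (-x)"
    using rz.add_inf_distrib_left[of "ppart x" 0 "-x"] by simp
  also have "inf 0 (-x) = - sup 0 x" using rz.neg_sup_eq_inf[of 0 x] by simp
  also have "sup 0 x = ppart x" unfolding ppart_def by (rule sup_commute)
  finally show ?thesis by simp
qed

lemma ppart_npart_sum: "ppart x + npart (x::'a::{ordered_real_vector,lattice}) = lat_abs x"
proof -
  have "ppart x + npart x = sup (ppart x + - x) (ppart x + 0)"
    unfolding npart_def using rz.add_sup_distrib_left[of "ppart x" "-x" 0] by simp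
  also have "ppart x + - x = sup 0 (-x)"
    unfolding ppart_def using rz.add_sup_distrib_right[of x 0 "-x"] by simp
  also have "sup (sup 0 (-x)) (ppart x + 0) = sup (sup x (-x)) 0"
    unfolding ppart_def by (simp add: sup_aci)
  also have "\<dots> = sup x (-x)" using lat_abs_nonneg[of x] unfolding lat_abs_def
    by (simp add: sup_absorb1)
  finally show ?thesis unfolding lat_abs_def .
qed

lemma ppart_le_abs: "ppart x \<le> lat_abs (x::'a::{ordered_real_vector,lattice})"
  using add_left_mono[OF npart_nonneg[of x], of "ppart x"] ppart_npart_sum[of x] by simp

lemma npart_le_abs: "npart x \<le> lat_abs (x::'a::{ordered_real_vector,lattice})"
  using add_right_mono[OF ppart_nonneg[of x], of "npart x"] ppart_npart_sum[of x] by simp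

lemma abs_diff_disj:
  fixes P Q :: "'a::{ordered_real_vector,lattice}"
  assumes "0 \<le> P" "0 \<le> Q" "inf P Q = 0"
  shows "lat_abs (P - Q) = P + Q"
proof -
  have sPQ: "sup P Q = P + Q" using rz.add_eq_inf_sup[of P Q] assms(3) by simp
  have "lat_abs (P - Q) = sup ((P + P) + - (P + Q)) ((Q + Q) + - (P + Q))"
    unfolding lat_abs_def by (simp add: algebra_simps)
  also have "\<dots> = sup (P + P) (Q + Q) + - (P + Q)"
    by (rule rz.add_sup_distrib_right[symmetric])
  also have "sup (P + P) (Q + Q) = 2 *\<^sub>R sup P Q"
    using scaleR_sup_nonneg[of 2 P Q] by (simp add: scaleR_2)
  finally show ?thesis using sPQ by (simp add: scaleR_2)
qed

lemma inf_add_le: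
  fixes a a' b :: "'a::{ordered_real_vector,lattice}"
  assumes "0 \<le> a" "0 \<le> a'" "0 \<le> b"
  shows "inf (a + a') b \<le> inf a b + inf a' b"
proof -
  have "inf a b + inf a' b = inf (a + inf a' b) (b + inf a' b)"
    by (rule rz.add_inf_distrib_right)
  also have "\<dots> = inf (inf (a + a') (a + b)) (inf (b + a') (b + b))"
    by (simp only: rz.add_inf_distrib_left)
  finally have eq: "inf a b + inf a' b = inf (inf (a + a') (a + b)) (inf (b + a') (b + b))" .
  have "inf (a + a') b \<le> a + a'" by simp
  moreover have "inf (a + a') b \<le> a + b" using assms by (meson add_increasing inf.coboundedI2 order_refl)
  moreover have "inf (a + a') b \<le> b + a'" using assms by (meson add_increasing2 inf.coboundedI2 order_refl)
  moreover have "inf (a + a') b \<le> b + b" using assms by (meson add_increasing inf.coboundedI2 order_refl)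
  ultimately show ?thesis unfolding eq by simp
qed


lemma lat_disjoint_sym: "lat_disjoint x y \<longleftrightarrow> lat_disjoint y (x::'a::{ordered_real_vector,lattice})"
  unfolding lat_disjoint_def by (simp add: inf_commute)

lemma lat_disjoint_zero [simp]: "lat_disjoint 0 (y::'a::{ordered_real_vector,lattice})"
  unfolding lat_disjoint_def using lat_abs_nonneg[of y] by (simp add: inf_absorb1)

lemma inf_nonneg: "0 \<le> a \<Longrightarrow> 0 \<le> b \<Longrightarrow> 0 \<le> inf a (b::'a::{ordered_real_vector,lattice})"
  by simp

lemma inf_scale_le:
  fixes a b :: "'a::{ordered_real_vector,lattice}"
  assumes "0 \<le> a" "0 \<le> b" "1 \<le> m" "c \<le> m"
  shows "inf (c *\<^sub>R a) b \<le> m *\<^sub>R inf a b"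
proof -
  have "c *\<^sub>R a \<le> m *\<^sub>R a" using scaleR_right_mono[OF assms(4) assms(1)] .
  moreover have "b \<le> m *\<^sub>R b" using scaleR_right_mono[OF assms(3) assms(2)] by simp
  ultimately have "inf (c *\<^sub>R a) b \<le> inf (m *\<^sub>R a) (m *\<^sub>R b)" by (rule inf_mono)
  also have "\<dots> = m *\<^sub>R inf a b" using scaleR_inf_nonneg[of m a b] assms(3) by simp
  finally show ?thesis .
qed

lemma lat_disjoint_dom:
  fixes u v y :: "'a::{ordered_real_vector,lattice}"
  assumes "lat_disjoint v y" "lat_abs u \<le> c *\<^sub>R lat_abs v"
  shows "lat_disjoint u y"
proof -
  define m where "m = max c 1"
  have "inf (lat_abs u) (lat_abs y) \<le> inf (c *\<^sub>R lat_abs v) (lat_abs y)"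
    using assms(2) by (rule inf_mono) simp
  also have "\<dots> \<le> m *\<^sub>R inf (lat_abs v) (lat_abs y)"
    by (rule inf_scale_le) (auto simp: m_def lat_abs_nonneg)
  also have "\<dots> = 0" using assms(1) unfolding lat_disjoint_def by simp
  finally have "inf (lat_abs u) (lat_abs y) \<le> 0" .
  moreover have "0 \<le> inf (lat_abs u) (lat_abs y)" by (intro le_infI lat_abs_nonneg)
  ultimately show ?thesis unfolding lat_disjoint_def by (rule antisym)
qed

lemma lat_disjoint_scale:
  "lat_disjoint x y \<Longrightarrow> lat_disjoint (c *\<^sub>R x) (y::'a::{ordered_real_vector,lattice})"
  by (rule lat_disjoint_dom[where c="\<bar>c\<bar>"], assumption, simp only: lat_abs_scale order_refl)

lemma lat_disjoint_le:
  fixes a b x y :: "'a::{ordered_real_vector,lattice}"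
  assumes "lat_disjoint x y" "0 \<le> a" "a \<le> lat_abs x" "0 \<le> b" "b \<le> lat_abs y"
  shows "inf a b = 0"
proof -
  have "inf a b \<le> inf (lat_abs x) (lat_abs y)" using assms by (intro inf_mono)
  then have "inf a b \<le> 0" using assms(1) unfolding lat_disjoint_def by simp
  then show ?thesis using assms by (simp add: antisym)
qed

lemma lat_disjoint_add:
  fixes x x' y :: "'a::{ordered_real_vector,lattice}"
  assumes "lat_disjoint x y" "lat_disjoint x' y"
  shows "lat_disjoint (x + x') y"
proof -
  have "inf (lat_abs (x + x')) (lat_abs y) \<le> inf (lat_abs x + lat_abs x') (lat_abs y)"
    using lat_abs_triangle by (rule inf_mono) simp
  also have "\<dots> \<le> inf (lat_abs x) (lat_abs y) + inf (lat_abs x') (lat_abs y)"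
    by (rule inf_add_le) (simp_all add: lat_abs_nonneg)
  also have "\<dots> = 0" using assms unfolding lat_disjoint_def by simp
  finally have "inf (lat_abs (x + x')) (lat_abs y) \<le> 0" .
  moreover have "0 \<le> inf (lat_abs (x + x')) (lat_abs y)" by (intro le_infI lat_abs_nonneg)
  ultimately show ?thesis unfolding lat_disjoint_def by (rule antisym)
qed

lemma lat_disjoint_sum:
  fixes f :: "'i \<Rightarrow> 'a::{ordered_real_vector,lattice}"
  assumes "finite I" "\<forall>i\<in>I. lat_disjoint (f i) y"
  shows "lat_disjoint (sum f I) y"
  using assms by (induction I rule: finite_induct) (auto intro: lat_disjoint_add)

lemma lat_abs_add_disj:
  fixes x y :: "'a::{ordered_real_vector,lattice}"
  assumes "lat_disjoint x y"
  shows "lat_abs (x + y) = lat_abs x + lat_abs y"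
proof -
  define P where "P = ppart x + ppart y"
  define Q where "Q = npart x + npart y"
  have xy: "x + y = P - Q" unfolding P_def Q_def
    using ppart_npart_diff[of x] ppart_npart_diff[of y] by (simp add: algebra_simps)
  have P0: "0 \<le> P" and Q0: "0 \<le> Q" unfolding P_def Q_def
    by (simp_all add: ppart_nonneg npart_nonneg add_nonneg_nonneg)
  have yx: "lat_disjoint y x" using assms lat_disjoint_sym by blast
  have z1: "inf (npart x) (ppart x) = 0" using ppart_npart_inf[of x] by (simp add: inf_commute)
  have z2: "inf (npart y) (ppart x) = 0"
    by (rule lat_disjoint_le[OF yx]) (simp_all add: ppart_nonneg npart_nonneg ppart_le_abs npart_le_abs)
  have z3: "inf (npart x) (ppart y) = 0"
    by (rule lat_disjoint_le[OF assms]) (simp_all add: ppart_nonneg npart_nonneg ppart_le_abs npart_le_abs)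
  have z4: "inf (npart y) (ppart y) = 0" using ppart_npart_inf[of y] by (simp add: inf_commute)
  have a: "inf Q (ppart x) \<le> 0"
    using inf_add_le[OF npart_nonneg npart_nonneg ppart_nonneg, of x y x] z1 z2 unfolding Q_def by simp
  have b: "inf Q (ppart y) \<le> 0"
    using inf_add_le[OF npart_nonneg npart_nonneg ppart_nonneg, of x y y] z3 z4 unfolding Q_def by simp
  have "inf P Q \<le> inf (ppart x) Q + inf (ppart y) Q"
    unfolding P_def by (rule inf_add_le) (simp_all add: ppart_nonneg Q0)
  also have "\<dots> \<le> 0" using a b by (simp add: inf_commute add_nonpos_nonpos)
  finally have "inf P Q = 0" using P0 Q0 by (simp add: antisym)
  then have "lat_abs (x + y) = P + Q" unfolding xy by (rule abs_diff_disj[OF P0 Q0])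
  also have "\<dots> = lat_abs x + lat_abs y" unfolding P_def Q_def
    using ppart_npart_sum[of x] ppart_npart_sum[of y] by (simp add: algebra_simps)
  finally show ?thesis .
qed

definition pdisj :: "'i set \<Rightarrow> ('i \<Rightarrow> 'a::{ordered_real_vector,lattice}) \<Rightarrow> bool" where
  "pdisj I x \<longleftrightarrow> (\<forall>i\<in>I. \<forall>j\<in>I. i \<noteq> j \<longrightarrow> lat_disjoint (x i) (x j))"

lemma pdisj_subset: "pdisj I x \<Longrightarrow> J \<subseteq> I \<Longrightarrow> pdisj J x"
  unfolding pdisj_def by blast

lemma lat_abs_sum_disj:
  fixes x :: "'i \<Rightarrow> 'a::{ordered_real_vector,lattice}"
  assumes "finite I" "pdisj I x"
  shows "lat_abs (\<Sum>i\<in>I. a i *\<^sub>R x i) = (\<Sum>i\<in>I. \<bar>a i\<bar> *\<^sub>R lat_abs (x i))"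
  using assms
proof (induction I rule: finite_induct)
  case empty then show ?case by simp
next
  case (insert j I)
  have pI: "pdisj I x" using insert.prems pdisj_subset by blast
  have "lat_disjoint (a j *\<^sub>R x j) (\<Sum>i\<in>I. a i *\<^sub>R x i)"
  proof -
    have "lat_disjoint (\<Sum>i\<in>I. a i *\<^sub>R x i) (a j *\<^sub>R x j)"
    proof (rule lat_disjoint_sum[OF insert.hyps(1)], intro ballI)
      fix i assume "i \<in> I"
      then have "i \<noteq> j" using insert.hyps(2) by auto
      then have "lat_disjoint (x i) (x j)" using insert.prems \<open>i \<in> I\<close> unfolding pdisj_def by auto
      then show "lat_disjoint (a i *\<^sub>R x i) (a j *\<^sub>R x j)"
        by (meson lat_disjoint_scale lat_disjoint_sym)
    qed
    then show ?thesis using lat_disjoint_sym by blast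
  qed
  then have "lat_abs (\<Sum>i\<in>insert j I. a i *\<^sub>R x i) = lat_abs (a j *\<^sub>R x j) + lat_abs (\<Sum>i\<in>I. a i *\<^sub>R x i)"
    using insert.hyps by (simp add: lat_abs_add_disj)
  then show ?case using insert.IH[OF pI] insert.hyps by (simp add: lat_abs_scale)
qed


lemma bl_norm_mono_abs:
  fixes x y :: "'a::{banach, ordered_real_vector, lattice}"
  assumes "banach_lattice TYPE('a)" "lat_abs x \<le> lat_abs y"
  shows "norm x \<le> norm y"
  using assms unfolding banach_lattice_def by blast

lemma bl_norm_mono:
  fixes x y :: "'a::{banach, ordered_real_vector, lattice}"
  assumes "banach_lattice TYPE('a)" "0 \<le> x" "x \<le> y"
  shows "norm x \<le> norm y"
  using bl_norm_mono_abs[OF assms(1)] assms(2,3) lat_abs_pos[of x] lat_abs_pos[of y] by simp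

lemma bl_norm_abs:
  fixes x :: "'a::{banach, ordered_real_vector, lattice}"
  assumes "banach_lattice TYPE('a)"
  shows "norm (lat_abs x) = norm x"
  using bl_norm_mono_abs[OF assms, of x "lat_abs x"] bl_norm_mono_abs[OF assms, of "lat_abs x" x]
  by simp

lemma pdisj_abs: "pdisj I x \<Longrightarrow> pdisj I (\<lambda>i. lat_abs (x i))"
  unfolding pdisj_def lat_disjoint_def by simp

lemma bl_norm_sum_abs:
  fixes x :: "'i \<Rightarrow> 'a::{banach, ordered_real_vector, lattice}"
  assumes "banach_lattice TYPE('a)" "finite I" "pdisj I x"
  shows "norm (\<Sum>i\<in>I. a i *\<^sub>R x i) = norm (\<Sum>i\<in>I. \<bar>a i\<bar> *\<^sub>R lat_abs (x i))"
proof -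
  have e1: "lat_abs (\<Sum>i\<in>I. \<bar>a i\<bar> *\<^sub>R lat_abs (x i)) = (\<Sum>i\<in>I. \<bar>\<bar>a i\<bar>\<bar> *\<^sub>R lat_abs (lat_abs (x i)))"
    by (rule lat_abs_sum_disj[OF assms(2) pdisj_abs[OF assms(3)]])
  have e2: "(\<Sum>i\<in>I. \<bar>\<bar>a i\<bar>\<bar> *\<^sub>R lat_abs (lat_abs (x i))) = (\<Sum>i\<in>I. \<bar>a i\<bar> *\<^sub>R lat_abs (x i))"
    by (simp only: abs_idempotent lat_abs_abs)
  have e3: "lat_abs (\<Sum>i\<in>I. a i *\<^sub>R x i) = (\<Sum>i\<in>I. \<bar>a i\<bar> *\<^sub>R lat_abs (x i))"
    by (rule lat_abs_sum_disj[OF assms(2,3)])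
  have eq: "lat_abs (\<Sum>i\<in>I. a i *\<^sub>R x i) = lat_abs (\<Sum>i\<in>I. \<bar>a i\<bar> *\<^sub>R lat_abs (x i))"
    using e1 e2 e3 by simp
  show ?thesis
    by (rule antisym; rule bl_norm_mono_abs[OF assms(1)]; simp only: eq order_refl)
qed

lemma bl_norm_sum_mono:
  fixes x :: "'i \<Rightarrow> 'a::{banach, ordered_real_vector, lattice}"
  assumes "banach_lattice TYPE('a)" "finite I" "pdisj I x" "\<And>i. i \<in> I \<Longrightarrow> \<bar>a i\<bar> \<le> \<bar>b i\<bar>"
  shows "norm (\<Sum>i\<in>I. a i *\<^sub>R x i) \<le> norm (\<Sum>i\<in>I. b i *\<^sub>R x i)"
proof -
  have "(\<Sum>i\<in>I. \<bar>a i\<bar> *\<^sub>R lat_abs (x i)) \<le> (\<Sum>i\<in>I. \<bar>b i\<bar> *\<^sub>R lat_abs (x i))"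
    by (intro sum_mono scaleR_right_mono assms(4) lat_abs_nonneg)
  then show ?thesis
    using lat_abs_sum_disj[OF assms(2,3), of a] lat_abs_sum_disj[OF assms(2,3), of b]
      bl_norm_mono_abs[OF assms(1)] by simp
qed

lemma closed_cone:
  assumes "banach_lattice TYPE('a::{banach, ordered_real_vector, lattice})"
  shows "closed {z::'a. 0 \<le> z}"
proof -
  have key: "norm (npart z) \<le> dist w z" if "0 \<le> w" for z w :: 'a
  proof -
    have "npart z \<le> ppart (w - z)" unfolding npart_def ppart_def
      using that by (intro sup_mono) simp_all
    also have "\<dots> \<le> lat_abs (w - z)" by (rule ppart_le_abs)
    finally have "norm (npart z) \<le> norm (lat_abs (w - z))"
      by (intro bl_norm_mono[OF assms] npart_nonneg)
    then show ?thesis using bl_norm_abs[OF assms] by (simp add: dist_norm)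
  qed
  show ?thesis unfolding closed_limpt
  proof (intro allI impI)
    fix z :: 'a assume "z islimpt {z. 0 \<le> z}"
    have "norm (npart z) < e" if "e > 0" for e
    proof -
      obtain x' where "x' \<in> {z. 0 \<le> z}" "dist x' z < e"
        using \<open>z islimpt _\<close> \<open>e > 0\<close> unfolding islimpt_approachable by blast
      then show ?thesis using key[of x' z] by simp
    qed
    then have "norm (npart z) = 0" by (metis less_irrefl norm_ge_zero order_le_less)
    then have "sup (-z) 0 = 0" unfolding npart_def by simp
    then have "-z \<le> 0" by (simp only: le_iff_sup)
    then show "z \<in> {z. 0 \<le> z}" by simp
  qed
qed

lemma small_mult_zero:
  fixes w u :: "'a::{banach, ordered_real_vector, lattice}"
  assumes "banach_lattice TYPE('a)" "0 \<le> w" "\<And>d. 0 < d \<Longrightarrow> d \<le> 1 \<Longrightarrow> w \<le> d *\<^sub>R u"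
  shows "w = 0"
proof (rule ccontr)
  assume "w \<noteq> 0"
  then have nw: "norm w > 0" by simp
  define d where "d = min 1 (norm w / (2 * (norm u + 1)))"
  have den: "0 < 2 * (norm u + 1)" by (smt (verit) norm_ge_zero)
  have "0 < norm w / (2 * (norm u + 1))" using divide_pos_pos[OF nw den] .
  then have d: "0 < d" "d \<le> 1" unfolding d_def by auto
  have "norm w \<le> norm (d *\<^sub>R u)" by (rule bl_norm_mono[OF assms(1,2) assms(3)[OF d]])
  also have "\<dots> = d * norm u" using d by simp
  also have "\<dots> \<le> norm w / (2 * (norm u + 1)) * norm u" unfolding d_def
    by (intro mult_right_mono) auto
  also have "\<dots> < norm w"
  proof -
    have "norm u / (2 * (norm u + 1)) < 1" by (subst divide_less_eq_1) (smt (verit) norm_ge_zero)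
    then have "(norm u / (2 * (norm u + 1))) * norm w < 1 * norm w"
      using nw by (intro mult_strict_right_mono)
    then show ?thesis by (simp add: mult.commute)
  qed
  finally show False by simp
qed


definition goodf :: "'a::{ordered_real_vector,lattice} set \<Rightarrow> bool" where
  "goodf V \<longleftrightarrow> finite V \<and> (\<forall>v\<in>V. 0 \<le> v \<and> v \<noteq> 0) \<and> (\<forall>v\<in>V. \<forall>w\<in>V. v \<noteq> w \<longrightarrow> inf v w = 0)"

lemma goodf_empty: "goodf {}"
  unfolding goodf_def by simp

lemma goodf_insert:
  fixes y :: "'a::{ordered_real_vector,lattice}"
  assumes "goodf V" "0 \<le> y" "y \<noteq> 0" "\<forall>v\<in>V. inf y v = 0"
  shows "goodf (insert y V) \<and> card (insert y V) = Suc (card V)"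
proof -
  have yV: "y \<notin> V"
  proof
    assume "y \<in> V"
    then have "inf y y = 0" using assms(4) by blast
    then show False using assms(3) by simp
  qed
  have fin: "finite V" using assms(1) unfolding goodf_def by blast
  have A: "finite (insert y V)" using fin by simp
  have Bp: "\<forall>v\<in>insert y V. 0 \<le> v \<and> v \<noteq> 0" using assms unfolding goodf_def by auto
  have C: "\<forall>v\<in>insert y V. \<forall>w\<in>insert y V. v \<noteq> w \<longrightarrow> inf v w = 0"
  proof (intro ballI impI)
    fix v w assume vw: "v \<in> insert y V" "w \<in> insert y V" "v \<noteq> w"
    show "inf v w = 0"
    proof (cases "v = y")
      case True then show ?thesis using vw assms(4) by auto
    next
      case False
      note F = False
      show ?thesis
      proof (cases "w = y")
        case True then have "inf w v = 0" using vw F assms(4) by auto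
        then show ?thesis by (simp add: inf_commute)
      next
        case False then show ?thesis using vw F assms(1) unfolding goodf_def by auto
      qed
    qed
  qed
  have "goodf (insert y V)" unfolding goodf_def using A Bp C by blast
  moreover have "card (insert y V) = Suc (card V)" using fin yV by simp
  ultimately show ?thesis by blast
qed

lemma goodf_repl:
  fixes a b v :: "'a::{ordered_real_vector,lattice}"
  assumes "goodf V" "v \<in> V" "0 \<le> a" "a \<noteq> 0" "0 \<le> b" "b \<noteq> 0" "inf a b = 0" "a \<le> v" "b \<le> v"
  shows "\<exists>W::'a set. goodf W \<and> card W = Suc (card V)"
proof -
  define V0 where "V0 = V - {v}"
  have fin: "finite V" and pos: "\<forall>v\<in>V. 0 \<le> v \<and> v \<noteq> 0"
    and dis: "\<forall>v\<in>V. \<forall>w\<in>V. v \<noteq> w \<longrightarrow> inf v w = 0"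
    using assms(1) unfolding goodf_def by blast+
  have "finite V0" unfolding V0_def using fin by simp
  moreover have "\<forall>v\<in>V0. 0 \<le> v \<and> v \<noteq> 0" using pos unfolding V0_def by blast
  moreover have "\<forall>v\<in>V0. \<forall>w\<in>V0. v \<noteq> w \<longrightarrow> inf v w = 0" using dis unfolding V0_def by blast
  ultimately have g0: "goodf V0" unfolding goodf_def by blast
  have small: "inf c v' = 0" if "v' \<in> V0" "0 \<le> c" "c \<le> v" for c v'
  proof -
    have v'V: "v' \<in> V" "v \<noteq> v'" using that(1) unfolding V0_def by blast+
    have "inf v v' = 0" using dis assms(2) v'V by blast
    moreover have "inf c v' \<le> inf v v'" using that(3) by (rule inf_mono) (rule order_refl)
    moreover have "0 \<le> inf c v'" using that(2) pos v'V(1) by (intro le_infI) blast+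
    ultimately show ?thesis by (metis antisym)
  qed
  have 1: "goodf (insert b V0) \<and> card (insert b V0) = Suc (card V0)"
    by (rule goodf_insert[OF g0 assms(5,6)]) (use small assms(5,9) in blast)
  have "\<forall>x\<in>insert b V0. inf a x = 0" using small assms(3,7,8) by blast
  then have 2: "goodf (insert a (insert b V0)) \<and> card (insert a (insert b V0)) = Suc (card (insert b V0))"
    by (intro goodf_insert[OF conjunct1[OF 1] assms(3,4)])
  have "card V = Suc (card V0)" using card_Suc_Diff1[OF fin assms(2)] unfolding V0_def by simp
  then have "card (insert a (insert b V0)) = Suc (card V)" using 1 2 by simp
  then show ?thesis using conjunct1[OF 2] by (intro exI[of _ "insert a (insert b V0)"] conjI)
qed

lemma ppart_eq0: "ppart (z::'a::{ordered_real_vector,lattice}) = 0 \<Longrightarrow> z \<le> 0"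
  unfolding ppart_def by (simp only: le_iff_sup)

lemma npart_eq0: "npart (z::'a::{ordered_real_vector,lattice}) = 0 \<Longrightarrow> 0 \<le> z"
  unfolding npart_def using le_iff_sup[of "-z" 0] by simp

lemma peel:
  fixes y u :: "'a::{banach, ordered_real_vector, lattice}"
  assumes B: "banach_lattice TYPE('a)" and g: "goodf V" and uV: "u \<in> V" and y0: "0 \<le> y"
    and nomore: "\<not> (\<exists>W::'a set. goodf W \<and> card W = Suc (card V))"
  shows "\<exists>c\<ge>0. c *\<^sub>R u \<le> y \<and> inf (y - c *\<^sub>R u) u = 0"
proof -
  have u0: "0 \<le> u" "u \<noteq> 0" using g uV unfolding goodf_def by auto
  define S where "S = {s::real. 0 \<le> s \<and> s *\<^sub>R u \<le> y}"
  have Ssub: "S \<subseteq> {0 .. norm y / norm u}"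
  proof
    fix s assume "s \<in> S"
    then have s: "0 \<le> s" "s *\<^sub>R u \<le> y" unfolding S_def by auto
    have "norm (s *\<^sub>R u) \<le> norm y" by (rule bl_norm_mono[OF B scaleR_nonneg_nonneg[OF s(1) u0(1)] s(2)])
    then have "s * norm u \<le> norm y" using s(1) by simp
    then show "s \<in> {0 .. norm y / norm u}" using s(1) u0 by (simp add: le_divide_eq)
  qed
  have "S = {0..} \<inter> (\<lambda>s. y - s *\<^sub>R u) -` {z. 0 \<le> z}"
    unfolding S_def by (rule set_eqI) simp
  moreover have "closed ((\<lambda>s::real. y - s *\<^sub>R u) -` {z. 0 \<le> z})"
    by (rule continuous_closed_vimage[OF closed_cone[OF B]]) (intro continuous_intros)
  ultimately have clS: "closed S" by (simp add: closed_Int)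
  have "compact ({0 .. norm y / norm u} \<inter> S)" by (rule compact_Int_closed[OF compact_Icc clS])
  then have "compact S" using Ssub by (simp add: Int_absorb1)
  moreover have "0 \<in> S" unfolding S_def using y0 by simp
  ultimately obtain c where cS: "c \<in> S" and cmax: "\<forall>s\<in>S. s \<le> c"
    using compact_attains_sup[of S] by blast
  have c0: "0 \<le> c" and cy: "c *\<^sub>R u \<le> y" using cS unfolding S_def by auto
  define rem where "rem = y - c *\<^sub>R u"
  have rem0: "0 \<le> rem" unfolding rem_def using cy by simp
  have "inf rem u = 0"
  proof (rule ccontr)
    assume wne: "inf rem u \<noteq> 0"
    define w where "w = inf rem u"
    have w0: "0 \<le> w" unfolding w_def using rem0 u0 by simp
    have "\<exists>d. 0 < d \<and> d \<le> 1 \<and> \<not> w \<le> d *\<^sub>R u"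
      using small_mult_zero[OF B w0, of u] wne unfolding w_def by blast
    then obtain d where d: "0 < d" "d \<le> 1" "\<not> w \<le> d *\<^sub>R u" by blast
    define a where "a = ppart (w - d *\<^sub>R u)"
    define b where "b = npart (rem - d *\<^sub>R u)"
    have du0: "0 \<le> d *\<^sub>R u" using d(1) u0(1) by (intro scaleR_nonneg_nonneg) simp_all
    have a0: "0 \<le> a" "a \<noteq> 0"
    proof -
      show "0 \<le> a" unfolding a_def by (rule ppart_nonneg)
      show "a \<noteq> 0"
      proof
        assume "a = 0"
        then have "w - d *\<^sub>R u \<le> 0" unfolding a_def by (rule ppart_eq0)
        then show False using d(3) by simp
      qed
    qed
    have bne: "b \<noteq> 0"
    proof
      assume "b = 0"
      then have "0 \<le> rem - d *\<^sub>R u" unfolding b_def by (rule npart_eq0)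
      then have "d *\<^sub>R u \<le> rem" by simp
      then have "(c + d) *\<^sub>R u \<le> y" unfolding rem_def by (simp add: algebra_simps)
      then have "c + d \<in> S" unfolding S_def using c0 d by simp
      then have "c + d \<le> c" using cmax by blast
      then show False using d(1) by simp
    qed
    have b0: "0 \<le> b" unfolding b_def by (rule npart_nonneg)
    have "a \<le> w" unfolding a_def ppart_def using w0 du0 by (intro sup_least) simp_all
    then have au: "a \<le> u" unfolding w_def by (meson inf_le2 order_trans)
    have "b \<le> d *\<^sub>R u" unfolding b_def npart_def using rem0 du0 by (intro sup_least) simp_all
    moreover have "d *\<^sub>R u \<le> u" using scaleR_right_mono[OF d(2) u0(1)] by simp
    ultimately have bu: "b \<le> u" by (rule order_trans)
    have "a \<le> ppart (rem - d *\<^sub>R u)" unfolding a_def ppart_def w_def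
      by (intro sup_mono) simp_all
    then have "inf a b \<le> inf (ppart (rem - d *\<^sub>R u)) (npart (rem - d *\<^sub>R u))"
      unfolding b_def by (rule inf_mono) simp
    also have "inf (ppart (rem - d *\<^sub>R u)) (npart (rem - d *\<^sub>R u)) = 0" by (rule ppart_npart_inf)
    finally have "inf a b \<le> 0" .
    then have "inf a b = 0" using a0 b0 by (simp add: antisym)
    then show False using goodf_repl[OF g uV a0 b0 bne _ au bu] nomore by blast
  qed
  then show ?thesis using c0 cy unfolding rem_def by blast
qed

lemma span_all:
  fixes V :: "'a::{banach, ordered_real_vector, lattice} set"
  assumes B: "banach_lattice TYPE('a)" and g: "goodf V"
    and nomore: "\<not> (\<exists>W::'a set. goodf W \<and> card W = Suc (card V))"
  shows "span V = UNIV"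
proof -
  have fin: "finite V" using g unfolding goodf_def by blast
  have pos: "y \<in> span V" if y0: "0 \<le> y" for y
  proof -
    have "U \<subseteq> V \<Longrightarrow> \<exists>rem. 0 \<le> rem \<and> rem \<le> y \<and> (\<forall>u\<in>U. inf rem u = 0) \<and> y - rem \<in> span U" for U
    proof (induction U rule: infinite_finite_induct)
      case (infinite A) then show ?case using finite_subset[OF _ fin] by blast
    next
      case empty then show ?case using y0 by (intro exI[of _ y]) simp
    next
      case (insert a U)
      then obtain r where r: "0 \<le> r" "r \<le> y" "\<forall>u\<in>U. inf r u = 0" "y - r \<in> span U" by auto
      have aV: "a \<in> V" using insert.prems by auto
      have a0: "0 \<le> a" using g aV unfolding goodf_def by auto
      obtain c where c: "0 \<le> c" "c *\<^sub>R a \<le> r" "inf (r - c *\<^sub>R a) a = 0"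
        using peel[OF B g aV r(1) nomore] by blast
      define r' where "r' = r - c *\<^sub>R a"
      have ca0: "0 \<le> c *\<^sub>R a" using c(1) a0 by (rule scaleR_nonneg_nonneg)
      have r'0: "0 \<le> r'" unfolding r'_def using c(2) by simp
      have r'r: "r' \<le> r" unfolding r'_def using ca0 by simp
      have "\<forall>u\<in>insert a U. inf r' u = 0"
      proof
        fix u assume "u \<in> insert a U"
        then show "inf r' u = 0"
        proof
          assume "u = a" then show ?thesis using c(3) unfolding r'_def by simp
        next
          assume uU: "u \<in> U"
          then have u0: "0 \<le> u" using g insert.prems unfolding goodf_def by auto
          have "inf r' u \<le> inf r u" using r'r by (rule inf_mono) simp
          then show ?thesis using r(3) uU r'0 u0 by (simp add: antisym)
        qed
      qed
      moreover have "y - r' \<in> span (insert a U)"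
      proof -
        have "y - r' = (y - r) + c *\<^sub>R a" unfolding r'_def by simp
        moreover have "y - r \<in> span (insert a U)" using r(4) span_mono[of U "insert a U"] by blast
        moreover have "c *\<^sub>R a \<in> span (insert a U)" by (intro span_scale span_base) simp
        ultimately show ?thesis by (metis span_add)
      qed
      ultimately show ?case using r'0 r'r r(2) by (meson order_trans)
    qed
    then obtain r where r: "0 \<le> r" "\<forall>u\<in>V. inf r u = 0" "y - r \<in> span V" by blast
    have "r = 0"
    proof (rule ccontr)
      assume "r \<noteq> 0"
      then show False using goodf_insert[OF g r(1) _ r(2)] nomore by blast
    qed
    then show ?thesis using r(3) by simp
  qed
  have "y \<in> span V" for y
  proof -
    have "y = ppart y - npart y" by (simp add: ppart_npart_diff)
    then show ?thesis using pos[OF ppart_nonneg] pos[OF npart_nonneg] by (metis span_diff)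
  qed
  then show ?thesis by auto
qed

lemma many_disjoint:
  assumes B: "banach_lattice TYPE('a::{banach, ordered_real_vector, lattice})"
    and inf: "infinite_dimensional TYPE('a)"
  shows "\<exists>V::'a set. goodf V \<and> card V = N"
proof (rule ccontr)
  assume nN: "\<not> (\<exists>V::'a set. goodf V \<and> card V = N)"
  have "\<exists>r. (\<exists>V::'a set. goodf V \<and> card V = r) \<and> \<not> (\<exists>V::'a set. goodf V \<and> card V = Suc r)"
  proof (rule ccontr)
    assume "\<not> ?thesis"
    then have step: "(\<exists>V::'a set. goodf V \<and> card V = r) \<Longrightarrow> (\<exists>V::'a set. goodf V \<and> card V = Suc r)" for r
      by blast
    have "\<exists>V::'a set. goodf V \<and> card V = r" for r
    proof (induction r)
      case 0 show ?case using goodf_empty by (intro exI[of _ "{}"]) simp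
    next
      case (Suc r) then show ?case by (rule step)
    qed
    then show False using nN by blast
  qed
  then obtain V :: "'a set" where g: "goodf V" and nomore: "\<not> (\<exists>W::'a set. goodf W \<and> card W = Suc (card V))"
    by blast
  have "span V = UNIV" by (rule span_all[OF B g nomore])
  moreover have "finite V" using g unfolding goodf_def by blast
  ultimately show False using inf unfolding infinite_dimensional_def by blast
qed


definition dfam :: "nat set \<Rightarrow> (nat \<Rightarrow> 'a::{banach,ordered_real_vector,lattice}) \<Rightarrow> bool" where
  "dfam S z \<longleftrightarrow> (\<forall>i\<in>S. norm (z i) = 1) \<and> pdisj S z"

lemma dfam_subset: "dfam S z \<Longrightarrow> T \<subseteq> S \<Longrightarrow> dfam T z"
  unfolding dfam_def pdisj_def by blast

lemma pos_disj_iff: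
  fixes a b :: "'a::{ordered_real_vector,lattice}"
  assumes "0 \<le> a" "0 \<le> b"
  shows "lat_disjoint a b \<longleftrightarrow> inf a b = 0"
  unfolding lat_disjoint_def using lat_abs_pos[OF assms(1)] lat_abs_pos[OF assms(2)] by simp

lemma sum_disj_le:
  fixes f :: "'i \<Rightarrow> 'a::{ordered_real_vector,lattice}"
  assumes "finite U" "\<forall>v\<in>U. 0 \<le> f v \<and> f v \<le> x"
    "\<forall>v\<in>U. \<forall>v'\<in>U. v \<noteq> v' \<longrightarrow> inf (f v) (f v') = 0" "0 \<le> x"
  shows "sum f U \<le> x"
  using assms
proof (induction U rule: finite_induct)
  case empty then show ?case by simp
next
  case (insert v U)
  have IH: "sum f U \<le> x" using insert by auto
  have s0: "0 \<le> sum f U" using insert.prems(1) by (intro sum_nonneg) auto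
  have fv: "0 \<le> f v" "f v \<le> x" using insert.prems(1) by auto
  have "lat_disjoint (sum f U) (f v)"
  proof (rule lat_disjoint_sum[OF insert.hyps(1)], intro ballI)
    fix v' assume "v' \<in> U"
    then have "v' \<noteq> v" "inf (f v') (f v) = 0" "0 \<le> f v'" using insert by auto
    then show "lat_disjoint (f v') (f v)" using pos_disj_iff fv(1) by blast
  qed
  then have "inf (f v) (sum f U) = 0" using pos_disj_iff[OF s0 fv(1)] by (simp add: inf_commute)
  then have "f v + sum f U = sup (f v) (sum f U)" using rz.add_eq_inf_sup[of "f v" "sum f U"] by simp
  also have "\<dots> \<le> x" using IH fv by simp
  finally show ?case using insert.hyps by simp
qed

lemma exists_le_avg:
  fixes f :: "'i \<Rightarrow> real"
  assumes "finite U" "U \<noteq> {}" "sum f U \<le> C"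
  shows "\<exists>v\<in>U. f v \<le> C / card U"
proof (rule ccontr)
  assume "\<not> ?thesis"
  then have "\<And>v. v \<in> U \<Longrightarrow> C / card U < f v" by auto
  then have "(\<Sum>v\<in>U. C / card U) < sum f U" by (rule sum_strict_mono[OF assms(1,2)])
  moreover have "(\<Sum>v\<in>U. C / card U) = C" using assms(1,2) by simp
  ultimately show False using assms(3) by simp
qed

lemma pigeon:
  fixes jf :: "'v \<Rightarrow> nat"
  assumes "finite V" "finite S" "\<forall>v\<in>V. jf v \<in> S" "card V = N * card S" "S \<noteq> {}"
  shows "\<exists>j\<in>S. N \<le> card {v\<in>V. jf v = j}"
proof (rule ccontr)
  assume "\<not> ?thesis"
  then have lt: "\<forall>j\<in>S. card {v\<in>V. jf v = j} < N" by auto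
  have "V = (\<Union>j\<in>S. {v\<in>V. jf v = j})" using assms(3) by blast
  then have "card V = (\<Sum>j\<in>S. card {v\<in>V. jf v = j})"
    using card_UN_disjoint[OF assms(2), of "\<lambda>j. {v\<in>V. jf v = j}"] assms(1) by auto
  also have "\<dots> < (\<Sum>j\<in>S. N)" using lt by (intro sum_strict_mono[OF assms(2,5)]) auto
  also have "\<dots> = N * card S" by simp
  finally show False using assms(4) by simp
qed


lemma step_ext:
  fixes z :: "nat \<Rightarrow> 'a::{banach, ordered_real_vector, lattice}" and a :: "nat \<Rightarrow> real"
  assumes B: "banach_lattice TYPE('a)" and ID: "infinite_dimensional TYPE('a)"
    and fS: "finite S" and tS: "t \<notin> S" and dz: "dfam S z" and AS: "A \<subseteq> S" and e: "e > 0"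
  shows "\<exists>w::nat \<Rightarrow> 'a. dfam (insert t S) w \<and> \<bar>norm (\<Sum>i\<in>A. a i *\<^sub>R w i) - norm (\<Sum>i\<in>A. a i *\<^sub>R z i)\<bar> \<le> e"
proof (cases "\<exists>y::'a. y \<noteq> 0 \<and> (\<forall>i\<in>S. lat_disjoint y (z i))")
  case True
  then obtain y :: 'a where y: "y \<noteq> 0" "\<forall>i\<in>S. lat_disjoint y (z i)" by blast
  define w where "w = z(t := (1 / norm y) *\<^sub>R y)"
  have wS: "w i = z i" if "i \<in> S" for i using that tS unfolding w_def by auto
  have wt: "w t = (1 / norm y) *\<^sub>R y" unfolding w_def by simp
  have dyt: "lat_disjoint (w t) (z i)" if "i \<in> S" for i
    unfolding wt using y(2) that by (intro lat_disjoint_scale) blast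
  have "dfam (insert t S) w"
    unfolding dfam_def pdisj_def
  proof (intro conjI ballI impI)
    fix i assume "i \<in> insert t S"
    then show "norm (w i) = 1"
    proof
      assume "i = t" then show ?thesis using wt y(1) by simp
    next
      assume "i \<in> S" then show ?thesis using wS dz unfolding dfam_def by simp
    qed
  next
    fix i j assume ij: "i \<in> insert t S" "j \<in> insert t S" "i \<noteq> j"
    show "lat_disjoint (w i) (w j)"
    proof (cases "i = t")
      case True then have "j \<in> S" using ij by auto
      then show ?thesis using dyt[of j] wS[of j] True by simp
    next
      case False then have iS: "i \<in> S" using ij by auto
      show ?thesis
      proof (cases "j = t")
        case True
        have "lat_disjoint (w t) (w i)" using dyt[OF iS] wS[OF iS] by simp
        then show ?thesis using True by (simp only: lat_disjoint_sym)
      next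
        case False then have "j \<in> S" using ij by auto
        then show ?thesis using iS ij(3) wS dz unfolding dfam_def pdisj_def by simp
      qed
    qed
  qed
  moreover have "(\<Sum>i\<in>A. a i *\<^sub>R w i) = (\<Sum>i\<in>A. a i *\<^sub>R z i)"
    using AS wS by (intro sum.cong) auto
  ultimately show ?thesis using e by (intro exI[of _ w]) simp
next
  case False
  then have noy: "y = 0" if "\<forall>i\<in>S. lat_disjoint y (z i)" for y :: 'a using that by blast
  have Sne: "S \<noteq> {}"
  proof
    assume "S = {}"
    then have "\<forall>y::'a. y = 0" using noy by blast
    have "y \<in> span ({}::'a set)" for y :: 'a
    proof -
      have "y = 0" using \<open>\<forall>y::'a. y = 0\<close> by blast
      then show ?thesis by (simp only: span_zero)
    qed
    then have "span ({}::'a set) = UNIV" by blast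
    then show False using ID unfolding infinite_dimensional_def by blast
  qed
  have fA: "finite A" using finite_subset[OF AS fS] .
  have pA: "pdisj A z" using dz AS pdisj_subset unfolding dfam_def by blast
  define F0 where "F0 = (\<Sum>i\<in>A. \<bar>a i\<bar> *\<^sub>R lat_abs (z i))"
  define nF where "nF = norm F0"
  have nFeq: "norm (\<Sum>i\<in>A. a i *\<^sub>R z i) = nF" unfolding nF_def F0_def by (rule bl_norm_sum_abs[OF B fA pA])
  have nF0: "0 \<le> nF" unfolding nF_def by simp
  define d where "d = min (1/4) (e / (2 * (nF + 1)))"
  have den: "0 < 2 * (nF + 1)" using nF0 by simp
  have d: "0 < d" "d \<le> 1/4" "d * (2 * (nF + 1)) \<le> e"
  proof -
    show "0 < d" unfolding d_def using e den by simp
    show "d \<le> 1/4" unfolding d_def by (rule min.cobounded1)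
    have "d \<le> e / (2 * (nF + 1))" unfolding d_def by simp
    then show "d * (2 * (nF + 1)) \<le> e" using den by (simp add: le_divide_eq)
  qed
  define N where "N = max 3 (nat \<lceil>(1 + 2 * nF) / d\<rceil>)"
  have N3: "3 \<le> N" unfolding N_def by simp
  have "(1 + 2 * nF) / d \<le> real N"
  proof -
    have "(1 + 2 * nF) / d \<le> real (nat \<lceil>(1 + 2 * nF) / d\<rceil>)" by (rule real_nat_ceiling_ge)
    also have "\<dots> \<le> real N" unfolding N_def by (intro of_nat_mono max.cobounded2)
    finally show ?thesis .
  qed
  then have "1 + 2 * nF \<le> d * real N" using d(1) by (simp add: divide_le_eq mult.commute)
  then have Nd: "(1 + 2 * nF) / real N \<le> d" using N3 by (simp add: divide_le_eq mult.commute)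
  obtain V :: "'a set" where V: "goodf V" "card V = N * card S" using many_disjoint[OF B ID] by blast
  have Vfin: "finite V" and Vpos: "\<forall>v\<in>V. 0 \<le> v \<and> v \<noteq> 0"
    and Vdis: "\<forall>v\<in>V. \<forall>w\<in>V. v \<noteq> w \<longrightarrow> inf v w = 0"
    using V(1) unfolding goodf_def by blast+
  have "\<forall>v\<in>V. \<exists>j\<in>S. inf v (lat_abs (z j)) \<noteq> 0"
  proof
    fix v assume vV: "v \<in> V"
    have "\<not> (\<forall>i\<in>S. lat_disjoint v (z i))" using noy Vpos vV by blast
    then obtain i where "i \<in> S" "\<not> lat_disjoint v (z i)" by blast
    then show "\<exists>j\<in>S. inf v (lat_abs (z j)) \<noteq> 0"
      unfolding lat_disjoint_def using lat_abs_pos[of v] Vpos vV by auto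
  qed
  then have "\<forall>v\<in>V. \<exists>j. j \<in> S \<and> inf v (lat_abs (z j)) \<noteq> 0" by blast
  from bchoice[OF this] obtain jf where jf: "\<forall>v\<in>V. jf v \<in> S \<and> inf v (lat_abs (z (jf v))) \<noteq> 0" by blast
  obtain j where j: "j \<in> S" "N \<le> card {v\<in>V. jf v = j}"
    using pigeon[OF Vfin fS _ V(2) Sne] jf by blast
  define Vj where "Vj = {v\<in>V. jf v = j}"
  define x where "x = lat_abs (z j)"
  define g where "g v = inf v x" for v
  have Vjfin: "finite Vj" unfolding Vj_def using Vfin by simp
  have cVj: "N \<le> card Vj" using j(2) unfolding Vj_def .
  have Vjne: "Vj \<noteq> {}" using cVj N3 by auto
  have VjV: "Vj \<subseteq> V" unfolding Vj_def by blast
  have x0: "0 \<le> x" unfolding x_def by (rule lat_abs_nonneg)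
  have nx: "norm x = 1" unfolding x_def using bl_norm_abs[OF B] dz j(1) unfolding dfam_def by simp
  have g0: "0 \<le> g v" "g v \<le> x" if "v \<in> Vj" for v
  proof -
    show "0 \<le> g v" unfolding g_def using Vpos that VjV x0 by (intro le_infI) blast+
    show "g v \<le> x" unfolding g_def by (rule inf_le2)
  qed
  have gne: "g v \<noteq> 0" if "v \<in> Vj" for v
    using jf that unfolding Vj_def g_def x_def by auto
  have gdis: "inf (g v) (g v') = 0" if "v \<in> Vj" "v' \<in> Vj" "v \<noteq> v'" for v v'
  proof -
    have "inf (g v) (g v') \<le> inf v v'" unfolding g_def by (intro inf_mono inf_le1)
    also have "inf v v' = 0" using Vdis that VjV by blast
    finally show ?thesis using g0(1)[OF that(1)] g0(1)[OF that(2)] by (simp add: antisym)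
  qed
  have "\<exists>M>0. \<not> (M *\<^sub>R g v \<le> x)" if vVj: "v \<in> Vj" for v
  proof (rule ccontr)
    assume "\<not> (\<exists>M>0. \<not> (M *\<^sub>R g v \<le> x))"
    then have all: "M *\<^sub>R g v \<le> x" if "M > 0" for M using that by blast
    have "g v = 0"
    proof (rule small_mult_zero[OF B g0(1)[OF vVj]])
      fix c :: real assume c: "0 < c" "c \<le> 1"
      have "(1/c) *\<^sub>R g v \<le> x" using all c by simp
      then have "c *\<^sub>R ((1/c) *\<^sub>R g v) \<le> c *\<^sub>R x" using c by (intro scaleR_left_mono) simp_all
      then show "g v \<le> c *\<^sub>R x" using c by simp
    qed
    then show False using gne vVj by blast
  qed
  then have "\<forall>v\<in>Vj. \<exists>M. M > 0 \<and> \<not> (M *\<^sub>R g v \<le> x)" by blast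
  from bchoice[OF this] obtain Mf where Mf: "\<forall>v\<in>Vj. Mf v > 0 \<and> \<not> (Mf v *\<^sub>R g v \<le> x)" by blast
  define vp where "vp v = inf x (Mf v *\<^sub>R g v)" for v
  define p where "p v = x - vp v" for v
  define q where "q v = ppart (Mf v *\<^sub>R g v - x)" for v
  have Mg0: "0 \<le> Mf v *\<^sub>R g v" if "v \<in> Vj" for v
    using Mf that g0(1)[OF that] by (intro scaleR_nonneg_nonneg) auto
  have vp0: "0 \<le> vp v" "vp v \<le> x" "vp v \<le> Mf v *\<^sub>R g v" if "v \<in> Vj" for v
  proof -
    show "0 \<le> vp v" unfolding vp_def using x0 Mg0[OF that] by (rule le_infI)
    show "vp v \<le> x" unfolding vp_def by (rule inf_le1)
    show "vp v \<le> Mf v *\<^sub>R g v" unfolding vp_def by (rule inf_le2)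
  qed
  have vpdis: "inf (vp v) (vp v') = 0" if "v \<in> Vj" "v' \<in> Vj" "v \<noteq> v'" for v v'
  proof -
    have d1: "lat_disjoint (g v) (g v')"
      using pos_disj_iff[OF g0(1)[OF that(1)] g0(1)[OF that(2)]] gdis[OF that] by simp
    have "lat_abs (vp v) \<le> Mf v *\<^sub>R lat_abs (g v)"
      using lat_abs_pos[OF vp0(1)[OF that(1)]] lat_abs_pos[OF g0(1)[OF that(1)]] vp0(3)[OF that(1)] by simp
    then have d2: "lat_disjoint (vp v) (g v')" by (rule lat_disjoint_dom[OF d1])
    then have d3: "lat_disjoint (g v') (vp v)" by (simp only: lat_disjoint_sym)
    have "lat_abs (vp v') \<le> Mf v' *\<^sub>R lat_abs (g v')"
      using lat_abs_pos[OF vp0(1)[OF that(2)]] lat_abs_pos[OF g0(1)[OF that(2)]] vp0(3)[OF that(2)] by simp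
    then have "lat_disjoint (vp v') (vp v)" by (rule lat_disjoint_dom[OF d3])
    then have "inf (vp v') (vp v) = 0" using pos_disj_iff[OF vp0(1)[OF that(2)] vp0(1)[OF that(1)]] by simp
    then show ?thesis by (simp add: inf_commute)
  qed
  have sumvp: "(\<Sum>v\<in>Vj. vp v) \<le> x"
    by (rule sum_disj_le[OF Vjfin _ _ x0]) (use vp0 vpdis in auto)
  have p_eq: "p v = npart (Mf v *\<^sub>R g v - x)" for v
  proof -
    have "p v = x + sup (-x) (-(Mf v *\<^sub>R g v))" unfolding p_def vp_def by (rule rz.diff_inf_eq_sup)
    also have "\<dots> = sup (x + -x) (x + -(Mf v *\<^sub>R g v))" by (rule rz.add_sup_distrib_left)
    also have "\<dots> = sup 0 (-(Mf v *\<^sub>R g v - x))" by simp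
    also have "\<dots> = npart (Mf v *\<^sub>R g v - x)" unfolding npart_def by (rule sup_commute)
    finally show ?thesis .
  qed
  have p0: "0 \<le> p v" for v unfolding p_eq by (rule npart_nonneg)
  have px: "p v \<le> x" if "v \<in> Vj" for v unfolding p_def using vp0(1)[OF that] by simp
  have q0: "0 \<le> q v" for v unfolding q_def by (rule ppart_nonneg)
  have qne: "q v \<noteq> 0" if "v \<in> Vj" for v
  proof
    assume "q v = 0"
    then have "Mf v *\<^sub>R g v - x \<le> 0" unfolding q_def by (rule ppart_eq0)
    then show False using Mf that by simp
  qed
  have pq: "inf (q v) (p v) = 0" for v unfolding q_def p_eq by (rule ppart_npart_inf)
  have qle: "q v \<le> Mf v *\<^sub>R x" if "v \<in> Vj" for v
  proof -
    have "q v \<le> Mf v *\<^sub>R g v" unfolding q_def ppart_def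
      using x0 Mg0[OF that] by (intro sup_least) simp_all
    also have "\<dots> \<le> Mf v *\<^sub>R x" using g0(2)[OF that] Mf that by (intro scaleR_left_mono) auto
    finally show ?thesis .
  qed
  define al where "al = (if j \<in> A then \<bar>a j\<bar> else 0)"
  define R where "R = (\<Sum>i\<in>A - {j}. \<bar>a i\<bar> *\<^sub>R lat_abs (z i))"
  have al0: "0 \<le> al" unfolding al_def by simp
  have R0: "0 \<le> R" unfolding R_def
    by (intro sum_nonneg scaleR_nonneg_nonneg abs_ge_zero lat_abs_nonneg)
  have F0eq: "F0 = R + al *\<^sub>R x"
  proof (cases "j \<in> A")
    case True then show ?thesis unfolding F0_def R_def al_def x_def
      using sum.remove[OF fA True, of "\<lambda>i. \<bar>a i\<bar> *\<^sub>R lat_abs (z i)"] by (simp add: add.commute)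
  next
    case False then have "A - {j} = A" by blast
    then show ?thesis unfolding F0_def R_def al_def using False by simp
  qed
  have F00: "0 \<le> F0" unfolding F0eq using R0 al0 x0 by (intro add_nonneg_nonneg scaleR_nonneg_nonneg)
  define G where "G v = R + al *\<^sub>R p v" for v
  have G0: "0 \<le> G v" "G v \<le> F0" if "v \<in> Vj" for v
  proof -
    show "0 \<le> G v" unfolding G_def using R0 al0 p0 by (intro add_nonneg_nonneg scaleR_nonneg_nonneg)
    show "G v \<le> F0" unfolding G_def F0eq using px[OF that] al0 by (intro add_left_mono scaleR_left_mono)
  qed
  have nG: "norm (G v) \<le> nF" if "v \<in> Vj" for v
    unfolding nF_def using G0[OF that] by (intro bl_norm_mono[OF B])
  have np: "norm (p v) \<le> 1" if "v \<in> Vj" for v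
    using bl_norm_mono[OF B p0 px[OF that]] nx by simp
  define n where "n = real (card Vj)"
  have n3: "3 \<le> n" unfolding n_def using cVj N3 by simp
  have sumG_eq: "(\<Sum>v\<in>Vj. G v) = n *\<^sub>R R + al *\<^sub>R (n *\<^sub>R x - (\<Sum>v\<in>Vj. vp v))"
    unfolding G_def p_def n_def
    by (simp add: sum.distrib scaleR_sum_right sum_subtractf scaleR_diff_right sum_constant_scaleR)
  have "(n - 1) *\<^sub>R F0 \<le> (\<Sum>v\<in>Vj. G v)"
  proof -
    have "al *\<^sub>R (\<Sum>v\<in>Vj. vp v) \<le> al *\<^sub>R x" using sumvp al0 by (rule scaleR_left_mono)
    then have "0 + al *\<^sub>R (\<Sum>v\<in>Vj. vp v) \<le> R + al *\<^sub>R x" using R0 by (intro add_mono)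
    then have "0 \<le> R + al *\<^sub>R x - al *\<^sub>R (\<Sum>v\<in>Vj. vp v)" by simp
    also have "R + al *\<^sub>R x - al *\<^sub>R (\<Sum>v\<in>Vj. vp v) = (\<Sum>v\<in>Vj. G v) - (n - 1) *\<^sub>R F0"
      unfolding sumG_eq F0eq by (simp add: algebra_simps)
    finally show ?thesis by simp
  qed
  then have "norm ((n - 1) *\<^sub>R F0) \<le> norm (\<Sum>v\<in>Vj. G v)"
    using n3 F00 by (intro bl_norm_mono[OF B]) (simp_all add: scaleR_nonneg_nonneg)
  also have "\<dots> \<le> (\<Sum>v\<in>Vj. norm (G v))" by (rule norm_sum)
  finally have sG: "(n - 1) * nF \<le> (\<Sum>v\<in>Vj. norm (G v))" using n3 unfolding nF_def by simp
  have sump_eq: "(\<Sum>v\<in>Vj. p v) = n *\<^sub>R x - (\<Sum>v\<in>Vj. vp v)"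
    unfolding p_def n_def by (simp add: sum_subtractf sum_constant_scaleR)
  have "(n - 1) *\<^sub>R x \<le> (\<Sum>v\<in>Vj. p v)" unfolding sump_eq using sumvp by (simp add: algebra_simps)
  then have "norm ((n - 1) *\<^sub>R x) \<le> norm (\<Sum>v\<in>Vj. p v)"
    using n3 x0 by (intro bl_norm_mono[OF B]) (simp_all add: scaleR_nonneg_nonneg)
  also have "\<dots> \<le> (\<Sum>v\<in>Vj. norm (p v))" by (rule norm_sum)
  finally have sp: "n - 1 \<le> (\<Sum>v\<in>Vj. norm (p v))" using n3 nx by simp
  define df where "df v = (nF - norm (G v)) + (1 + nF) * (1 - norm (p v))" for v
  have "(\<Sum>v\<in>Vj. df v) = (n * nF - (\<Sum>v\<in>Vj. norm (G v))) + (1 + nF) * (n - (\<Sum>v\<in>Vj. norm (p v)))"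
  proof -
    have "(\<Sum>v\<in>Vj. df v) = (\<Sum>v\<in>Vj. nF - norm (G v)) + (\<Sum>v\<in>Vj. (1 + nF) * (1 - norm (p v)))"
      unfolding df_def by (rule sum.distrib)
    also have "(\<Sum>v\<in>Vj. nF - norm (G v)) = n * nF - (\<Sum>v\<in>Vj. norm (G v))"
      unfolding n_def by (simp add: sum_subtractf)
    also have "(\<Sum>v\<in>Vj. (1 + nF) * (1 - norm (p v))) = (1 + nF) * (\<Sum>v\<in>Vj. (1 - norm (p v)))"
      by (rule sum_distrib_left[symmetric])
    also have "(\<Sum>v\<in>Vj. (1 - norm (p v))) = n - (\<Sum>v\<in>Vj. norm (p v))"
      unfolding n_def by (simp add: sum_subtractf)
    finally show ?thesis .
  qed
  also have "\<dots> \<le> nF + (1 + nF) * 1"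
  proof (rule add_mono)
    show "n * nF - (\<Sum>v\<in>Vj. norm (G v)) \<le> nF" using sG by (simp add: algebra_simps)
    show "(1 + nF) * (n - (\<Sum>v\<in>Vj. norm (p v))) \<le> (1 + nF) * 1"
      using sp nF0 by (intro mult_left_mono) simp_all
  qed
  finally have sdf: "(\<Sum>v\<in>Vj. df v) \<le> 1 + 2 * nF" by simp
  obtain v where vVj: "v \<in> Vj" and dv: "df v \<le> (1 + 2 * nF) / card Vj"
    using exists_le_avg[OF Vjfin Vjne sdf] by blast
  have "(1 + 2 * nF) / card Vj \<le> (1 + 2 * nF) / N"
    using cVj N3 nF0 by (intro divide_left_mono) simp_all
  then have dvd: "df v \<le> d" using dv Nd by simp
  have t1: "nF - norm (G v) \<le> d" and t2: "1 - norm (p v) \<le> d"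
  proof -
    have a1: "0 \<le> nF - norm (G v)" using nG[OF vVj] by simp
    have a2: "0 \<le> 1 - norm (p v)" using np[OF vVj] by simp
    have a3: "1 - norm (p v) \<le> (1 + nF) * (1 - norm (p v))" using a2 nF0
      using mult_right_mono[of 1 "1 + nF" "1 - norm (p v)"] by simp
    show "nF - norm (G v) \<le> d" using dvd a1 a2 nF0 unfolding df_def
      by (smt (verit) mult_nonneg_nonneg)
    show "1 - norm (p v) \<le> d" using dvd a1 a3 unfolding df_def by simp
  qed
  define r where "r = norm (p v)"
  have r1: "3/4 \<le> r" using t2 d(2) unfolding r_def by linarith
  have r2: "r \<le> 1" using np[OF vVj] unfolding r_def .
  have r: "3/4 \<le> r" "r \<le> 1" "0 < r" using r1 r2 by linarith+
  have pne: "p v \<noteq> 0" using r unfolding r_def by auto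
  have tj: "t \<noteq> j" using tS j(1) by blast
  define w where "w = z(j := (1/r) *\<^sub>R p v, t := (1 / norm (q v)) *\<^sub>R q v)"
  have wt: "w t = (1 / norm (q v)) *\<^sub>R q v" unfolding w_def by simp
  have wj: "w j = (1/r) *\<^sub>R p v" unfolding w_def using tj by simp
  have wo: "w i = z i" if "i \<noteq> j" "i \<noteq> t" for i unfolding w_def using that by simp
  have K1: "lat_disjoint (p v) (z i)" if "i \<in> S" "i \<noteq> j" for i
  proof -
    have ji: "j \<noteq> i" using that(2) by simp
    have "pdisj S z" using dz unfolding dfam_def by blast
    then have "lat_disjoint (z j) (z i)" unfolding pdisj_def using j(1) that(1) ji by blast
    moreover have "lat_abs (p v) \<le> 1 *\<^sub>R lat_abs (z j)"
      using lat_abs_pos[OF p0] px[OF vVj] unfolding x_def by simp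
    ultimately show ?thesis by (rule lat_disjoint_dom)
  qed
  have K2: "lat_disjoint (q v) (z i)" if "i \<in> S" "i \<noteq> j" for i
  proof -
    have ji: "j \<noteq> i" using that(2) by simp
    have "pdisj S z" using dz unfolding dfam_def by blast
    then have "lat_disjoint (z j) (z i)" unfolding pdisj_def using j(1) that(1) ji by blast
    moreover have "lat_abs (q v) \<le> Mf v *\<^sub>R lat_abs (z j)"
      using lat_abs_pos[OF q0] qle[OF vVj] unfolding x_def by simp
    ultimately show ?thesis by (rule lat_disjoint_dom)
  qed
  have K3: "lat_disjoint (q v) (p v)" using pos_disj_iff[OF q0 p0] pq by simp
  have Dj: "lat_disjoint (w j) (w i)" if "i \<in> insert t S" "i \<noteq> j" for i
  proof (cases "i = t")
    case True
    have "lat_disjoint (p v) (q v)" using K3 by (simp only: lat_disjoint_sym)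
    then have "lat_disjoint ((1/r) *\<^sub>R p v) (q v)" by (rule lat_disjoint_scale)
    then have "lat_disjoint (q v) ((1/r) *\<^sub>R p v)" by (simp only: lat_disjoint_sym)
    then have "lat_disjoint ((1 / norm (q v)) *\<^sub>R q v) ((1/r) *\<^sub>R p v)" by (rule lat_disjoint_scale)
    then have "lat_disjoint ((1/r) *\<^sub>R p v) ((1 / norm (q v)) *\<^sub>R q v)" by (simp only: lat_disjoint_sym)
    then show ?thesis unfolding wj wt True .
  next
    case False then have "i \<in> S" using that by blast
    then have "lat_disjoint (p v) (z i)" using that(2) by (rule K1)
    then show ?thesis unfolding wj wo[OF that(2) False] by (rule lat_disjoint_scale)
  qed
  have Dt: "lat_disjoint (w t) (w i)" if "i \<in> insert t S" "i \<noteq> t" for i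
  proof (cases "i = j")
    case True
    have "lat_disjoint (p v) (q v)" using K3 by (simp only: lat_disjoint_sym)
    then have "lat_disjoint ((1/r) *\<^sub>R p v) (q v)" by (rule lat_disjoint_scale)
    then have "lat_disjoint (q v) ((1/r) *\<^sub>R p v)" by (simp only: lat_disjoint_sym)
    then have "lat_disjoint ((1 / norm (q v)) *\<^sub>R q v) ((1/r) *\<^sub>R p v)" by (rule lat_disjoint_scale)
    then show ?thesis unfolding wj wt True .
  next
    case False then have "i \<in> S" using that by blast
    then have "lat_disjoint (q v) (z i)" using False by (rule K2)
    then show ?thesis unfolding wt wo[OF False that(2)] by (rule lat_disjoint_scale)
  qed
  have dw: "dfam (insert t S) w"
    unfolding dfam_def pdisj_def
  proof (intro conjI ballI impI)
    fix i assume iS: "i \<in> insert t S"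
    show "norm (w i) = 1"
    proof (cases "i = t")
      case True then show ?thesis using wt qne[OF vVj] by simp
    next
      case False note it = False
      show ?thesis
      proof (cases "i = j")
        case True then show ?thesis using wj r unfolding r_def by simp
      next
        case False then show ?thesis using wo[OF False it] iS it dz unfolding dfam_def by simp
      qed
    qed
  next
    fix i i' assume ii: "i \<in> insert t S" "i' \<in> insert t S" "i \<noteq> i'"
    show "lat_disjoint (w i) (w i')"
    proof (cases "i = t \<or> i = j")
      case True then show ?thesis using Dj Dt ii by blast
    next
      case False note F1 = False
      show ?thesis
      proof (cases "i' = t \<or> i' = j")
        case True then have "lat_disjoint (w i') (w i)" using Dj Dt ii by blast
        then show ?thesis by (simp only: lat_disjoint_sym)
      next
        case False
        then have "i \<in> S" "i' \<in> S" using F1 ii by auto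
        then show ?thesis using wo F1 False ii(3) dz unfolding dfam_def pdisj_def by auto
      qed
    qed
  qed
  have AtS: "A \<subseteq> insert t S" using AS by blast
  have pAw: "pdisj A w" using dw AtS pdisj_subset unfolding dfam_def by blast
  define H where "H = R + al *\<^sub>R ((1/r) *\<^sub>R p v)"
  have Heq: "(\<Sum>i\<in>A. \<bar>a i\<bar> *\<^sub>R lat_abs (w i)) = H"
  proof -
    have Rw: "(\<Sum>i\<in>A - {j}. \<bar>a i\<bar> *\<^sub>R lat_abs (w i)) = R" unfolding R_def
    proof (rule sum.cong[OF refl])
      fix i assume "i \<in> A - {j}"
      then have "i \<noteq> j" "i \<noteq> t" using AS tS by auto
      then show "\<bar>a i\<bar> *\<^sub>R lat_abs (w i) = \<bar>a i\<bar> *\<^sub>R lat_abs (z i)" using wo by simp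
    qed
    show ?thesis
    proof (cases "j \<in> A")
      case True
      have "lat_abs (w j) = (1/r) *\<^sub>R p v" unfolding wj using r p0
        by (intro lat_abs_pos scaleR_nonneg_nonneg) simp_all
      then show ?thesis unfolding H_def al_def
        using sum.remove[OF fA True, of "\<lambda>i. \<bar>a i\<bar> *\<^sub>R lat_abs (w i)"] Rw True by (simp add: add.commute)
    next
      case False then have "A - {j} = A" by blast
      then show ?thesis using Rw False unfolding H_def al_def by simp
    qed
  qed
  have nw: "norm (\<Sum>i\<in>A. a i *\<^sub>R w i) = norm H"
    using bl_norm_sum_abs[OF B fA pAw, of a] Heq by simp
  have GH: "G v \<le> H"
  proof -
    have h: "1 *\<^sub>R p v \<le> (1/r) *\<^sub>R p v" using r p0 by (intro scaleR_right_mono) simp_all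
    have "al *\<^sub>R (1 *\<^sub>R p v) \<le> al *\<^sub>R ((1/r) *\<^sub>R p v)" by (rule scaleR_left_mono[OF h al0])
    then have "al *\<^sub>R p v \<le> al *\<^sub>R ((1/r) *\<^sub>R p v)" by (simp only: scaleR_one)
    then show ?thesis unfolding G_def H_def by (rule add_left_mono)
  qed
  have HF: "H \<le> (1/r) *\<^sub>R F0"
  proof -
    have "1 *\<^sub>R R \<le> (1/r) *\<^sub>R R" using r R0 by (intro scaleR_right_mono) simp_all
    moreover have "(1/r) *\<^sub>R p v \<le> (1/r) *\<^sub>R x" using r px[OF vVj] by (intro scaleR_left_mono) simp_all
    then have "al *\<^sub>R ((1/r) *\<^sub>R p v) \<le> al *\<^sub>R ((1/r) *\<^sub>R x)" by (rule scaleR_left_mono[OF _ al0])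
    ultimately have "H \<le> (1/r) *\<^sub>R R + al *\<^sub>R ((1/r) *\<^sub>R x)" unfolding H_def by (intro add_mono) simp_all
    also have "\<dots> = (1/r) *\<^sub>R F0" unfolding F0eq by (simp add: algebra_simps)
    finally show ?thesis .
  qed
  have lowH: "nF - d \<le> norm H"
  proof -
    have "norm (G v) \<le> norm H" using G0(1)[OF vVj] GH by (rule bl_norm_mono[OF B])
    then show ?thesis using t1 by simp
  qed
  have upH: "norm H \<le> nF / r"
  proof -
    have "norm H \<le> norm ((1/r) *\<^sub>R F0)" using G0(1)[OF vVj] GH HF
      by (intro bl_norm_mono[OF B]) (auto intro: order_trans)
    then show ?thesis using r unfolding nF_def by simp
  qed
  have "nF / r - nF \<le> e"
  proof -
    have "1 - r \<le> d" using t2 unfolding r_def .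
    have "d * (3/4) \<le> d * r" using d(1) r(1) by (intro mult_left_mono) simp_all
    moreover have "2 * d * r = 2 * (d * r)" by simp
    ultimately have "1 - r \<le> 2 * d * r" using \<open>1 - r \<le> d\<close> d(1) by linarith
    then have "(1 - r) / r \<le> 2 * d" using r(3) by (simp add: divide_le_eq)
    then have "nF * ((1 - r) / r) \<le> nF * (2 * d)" using nF0 by (rule mult_left_mono)
    moreover have "nF / r - nF = nF * ((1 - r) / r)" using r(3) by (simp add: field_simps)
    moreover have "nF * (2 * d) \<le> e" using d(1,3) nF0 by (simp add: algebra_simps)
    ultimately show ?thesis by simp
  qed
  moreover have "d \<le> e" using d(1,3) nF0 by (smt (verit) mult_le_cancel_left1)
  ultimately have "\<bar>norm H - nF\<bar> \<le> e" using lowH upH by simp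
  then show ?thesis using dw nw nFeq by (intro exI[of _ w]) simp
qed


lemma ext_fam_D:
  fixes z :: "nat \<Rightarrow> 'a::{banach, ordered_real_vector, lattice}" and a :: "nat \<Rightarrow> real"
  assumes B: "banach_lattice TYPE('a)" and ID: "infinite_dimensional TYPE('a)"
    and fD: "finite D"
  shows "finite S \<Longrightarrow> D \<inter> S = {} \<Longrightarrow> dfam S z \<Longrightarrow> A \<subseteq> S \<Longrightarrow> e > 0 \<Longrightarrow>
    \<exists>w::nat \<Rightarrow> 'a. dfam (S \<union> D) w \<and> \<bar>norm (\<Sum>i\<in>A. a i *\<^sub>R w i) - norm (\<Sum>i\<in>A. a i *\<^sub>R z i)\<bar> \<le> e"
  using fD
proof (induction D arbitrary: S z e rule: finite_induct)
  case empty then show ?case by (intro exI[of _ z]) simp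
next
  case (insert t D)
  have tS: "t \<notin> S" using insert.prems(2) by blast
  have e2: "e / 2 > 0" using insert.prems(5) by simp
  obtain w1 :: "nat \<Rightarrow> 'a" where w1: "dfam (insert t S) w1"
    "\<bar>norm (\<Sum>i\<in>A. a i *\<^sub>R w1 i) - norm (\<Sum>i\<in>A. a i *\<^sub>R z i)\<bar> \<le> e / 2"
    using step_ext[OF B ID insert.prems(1) tS insert.prems(3,4) e2, of a] by blast
  have "finite (insert t S)" using insert.prems(1) by simp
  moreover have "D \<inter> insert t S = {}" using insert.prems(2) insert.hyps(2) by blast
  moreover have "A \<subseteq> insert t S" using insert.prems(4) by blast
  ultimately obtain w :: "nat \<Rightarrow> 'a" where w: "dfam (insert t S \<union> D) w"
    "\<bar>norm (\<Sum>i\<in>A. a i *\<^sub>R w i) - norm (\<Sum>i\<in>A. a i *\<^sub>R w1 i)\<bar> \<le> e / 2"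
    using insert.IH[OF _ _ w1(1) _ e2] by blast
  have "S \<union> insert t D = insert t S \<union> D" by blast
  moreover have "\<bar>norm (\<Sum>i\<in>A. a i *\<^sub>R w i) - norm (\<Sum>i\<in>A. a i *\<^sub>R z i)\<bar> \<le> e"
    using w(2) w1(2) by linarith
  ultimately show ?case using w(1) by (intro exI[of _ w]) simp
qed

lemma ext_to_M:
  fixes z :: "nat \<Rightarrow> 'a::{banach, ordered_real_vector, lattice}" and a :: "nat \<Rightarrow> real"
  assumes B: "banach_lattice TYPE('a)" and ID: "infinite_dimensional TYPE('a)"
    and "S \<subseteq> {..<M}" "dfam S z" "A \<subseteq> S" "e > 0"
  shows "\<exists>w::nat \<Rightarrow> 'a. dfam {..<M} w \<and> \<bar>norm (\<Sum>i\<in>A. a i *\<^sub>R w i) - norm (\<Sum>i\<in>A. a i *\<^sub>R z i)\<bar> \<le> e"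
proof -
  have fS: "finite S" using assms(3) finite_subset by blast
  have "\<exists>w::nat \<Rightarrow> 'a. dfam (S \<union> ({..<M} - S)) w \<and> \<bar>norm (\<Sum>i\<in>A. a i *\<^sub>R w i) - norm (\<Sum>i\<in>A. a i *\<^sub>R z i)\<bar> \<le> e"
    by (rule ext_fam_D[OF B ID _ fS _ assms(4,5,6)]) auto
  moreover have "S \<union> ({..<M} - S) = {..<M}" using assms(3) by blast
  ultimately show ?thesis by simp
qed

lemma exists_dfam:
  assumes B: "banach_lattice TYPE('a::{banach, ordered_real_vector, lattice})"
    and ID: "infinite_dimensional TYPE('a)"
  shows "\<exists>w::nat \<Rightarrow> 'a. dfam {..<M} w"
proof -
  have "dfam {} (\<lambda>i. 0::'a)" unfolding dfam_def pdisj_def by simp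
  then show ?thesis using ext_to_M[OF B ID, of "{}" M "\<lambda>i. 0::'a" "{}" 1 "\<lambda>i. 0"] by auto
qed

lemma dt_iff: "x \<in> disj_tuples TYPE('a::{banach, ordered_real_vector, lattice}) n \<longleftrightarrow> dfam {..<n} x"
  unfolding disj_tuples_def dfam_def pdisj_def by auto

lemma subsum_norm:
  fixes x :: "nat \<Rightarrow> 'a::{banach, ordered_real_vector, lattice}"
  assumes B: "banach_lattice TYPE('a)" and "finite I" "J \<subseteq> I" "pdisj I x"
  shows "norm (\<Sum>i\<in>J. c i *\<^sub>R x i) \<le> norm (\<Sum>i\<in>I. c i *\<^sub>R x i)"
proof -
  have "(\<Sum>i\<in>J. c i *\<^sub>R x i) = (\<Sum>i\<in>I. (if i \<in> J then c i else 0) *\<^sub>R x i)"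
  proof -
    have "(\<Sum>i\<in>I. (if i \<in> J then c i else 0) *\<^sub>R x i) = (\<Sum>i\<in>I. if i \<in> J then c i *\<^sub>R x i else 0)"
      by (rule sum.cong) auto
    also have "\<dots> = (\<Sum>i\<in>I \<inter> J. c i *\<^sub>R x i)" by (rule sum.inter_restrict[OF assms(2), symmetric])
    also have "I \<inter> J = J" using assms(3) by blast
    finally show ?thesis by simp
  qed
  also have "norm \<dots> \<le> norm (\<Sum>i\<in>I. c i *\<^sub>R x i)"
    by (rule bl_norm_sum_mono[OF B assms(2,4)]) simp
  finally show ?thesis .
qed

lemma disj_sums:
  fixes x :: "nat \<Rightarrow> 'a::{banach, ordered_real_vector, lattice}"
  assumes "pdisj I x" "finite I" "\<forall>i\<in>I. f i = 0 \<or> g i = 0"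
  shows "lat_disjoint (\<Sum>i\<in>I. f i *\<^sub>R x i) (\<Sum>i\<in>I. g i *\<^sub>R x i)"
proof -
  have "lat_disjoint (f i *\<^sub>R x i) (\<Sum>i'\<in>I. g i' *\<^sub>R x i')" if iI: "i \<in> I" for i
  proof (cases "f i = 0")
    case True then show ?thesis by simp
  next
    case False
    have "lat_disjoint (\<Sum>i'\<in>I. g i' *\<^sub>R x i') (f i *\<^sub>R x i)"
    proof (rule lat_disjoint_sum[OF assms(2)], intro ballI)
      fix i' assume i'I: "i' \<in> I"
      show "lat_disjoint (g i' *\<^sub>R x i') (f i *\<^sub>R x i)"
      proof (cases "i' = i")
        case True then have "g i' = 0" using False assms(3) iI by auto
        then show ?thesis by simp
      next
        case ne: False
        then have "lat_disjoint (x i') (x i)" using assms(1) iI i'I unfolding pdisj_def by blast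
        then have "lat_disjoint (g i' *\<^sub>R x i') (x i)" by (rule lat_disjoint_scale)
        then have "lat_disjoint (x i) (g i' *\<^sub>R x i')" by (simp only: lat_disjoint_sym)
        then have "lat_disjoint (f i *\<^sub>R x i) (g i' *\<^sub>R x i')" by (rule lat_disjoint_scale)
        then show ?thesis by (simp only: lat_disjoint_sym)
      qed
    qed
    then show ?thesis by (simp only: lat_disjoint_sym)
  qed
  then show ?thesis by (intro lat_disjoint_sum[OF assms(2)]) blast
qed

lemma XU_n_ge:
  fixes x :: "nat \<Rightarrow> 'a::{banach, ordered_real_vector, lattice}"
  assumes "dfam {..<n} x"
  shows "ereal (norm (\<Sum>i<n. b i *\<^sub>R x i)) \<le> XU_n TYPE('a) n b"
  unfolding XU_n_def using assms dt_iff[of x n] by (intro SUP_upper) simp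

lemma Phi_n_le:
  fixes x :: "nat \<Rightarrow> 'a::{banach, ordered_real_vector, lattice}"
  assumes "dfam {..<n} x"
  shows "Phi_n TYPE('a) n b \<le> ereal (norm (\<Sum>i<n. b i *\<^sub>R x i))"
  unfolding Phi_n_def using assms dt_iff[of x n] by (intro INF_lower) simp

lemma XU_norm_nonneg: "0 \<le> XU_norm TYPE('a::{banach, ordered_real_vector, lattice}) b"
proof -
  have "dfam {..<0} (\<lambda>i. 0::'a)" unfolding dfam_def pdisj_def by simp
  then have "ereal (norm (\<Sum>i<0. b i *\<^sub>R (0::'a))) \<le> XU_n TYPE('a) 0 b" by (rule XU_n_ge)
  also have "\<dots> \<le> XU_norm TYPE('a) b" unfolding XU_norm_def by (rule SUP_upper) simp
  finally show ?thesis by (simp add: zero_ereal_def)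
qed

lemma Phi_n_nonneg: "0 \<le> Phi_n TYPE('a::{banach, ordered_real_vector, lattice}) n b"
  unfolding Phi_n_def by (intro INF_greatest) simp

lemma XL_n_nonneg: "0 \<le> XL_n TYPE('a::{banach, ordered_real_vector, lattice}) n b"
  unfolding XL_n_def by (intro Inf_greatest) (auto intro: sum_nonneg Phi_n_nonneg)

lemma XL_norm_nonneg: "0 \<le> XL_norm TYPE('a::{banach, ordered_real_vector, lattice}) b"
proof -
  have "0 \<le> XL_n TYPE('a) 0 b" by (rule XL_n_nonneg)
  also have "\<dots> \<le> XL_norm TYPE('a) b" unfolding XL_norm_def by (rule SUP_upper) simp
  finally show ?thesis .
qed

lemma Phi_mono_n:
  assumes B: "banach_lattice TYPE('a::{banach, ordered_real_vector, lattice})" and "n \<le> n'"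
  shows "Phi_n TYPE('a) n b \<le> Phi_n TYPE('a) n' b"
  unfolding Phi_n_def[of _ n'] 
proof (rule INF_greatest)
  fix x assume "x \<in> disj_tuples TYPE('a) n'"
  then have x: "dfam {..<n'} x" using dt_iff by blast
  then have "dfam {..<n} x" using dfam_subset assms(2) by fastforce
  then have "Phi_n TYPE('a) n b \<le> ereal (norm (\<Sum>i<n. b i *\<^sub>R x i))" by (rule Phi_n_le)
  also have "\<dots> \<le> ereal (norm (\<Sum>i<n'. b i *\<^sub>R x i))"
    using subsum_norm[OF B _ _ conjunct2[OF x[unfolded dfam_def]], of "{..<n}" b] assms(2) by simp
  finally show "Phi_n TYPE('a) n b \<le> ereal (norm (\<Sum>i<n'. b i *\<^sub>R x i))" .
qed

lemma XL_mono_n: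
  assumes B: "banach_lattice TYPE('a::{banach, ordered_real_vector, lattice})" and "n \<le> n'"
  shows "XL_n TYPE('a) n b \<le> XL_n TYPE('a) n' b"
  unfolding XL_n_def[of _ n']
proof (rule Inf_greatest)
  fix y assume "y \<in> {\<Sum>k<K. Phi_n TYPE('a) n' (bb k) |(K::nat) (bb::nat \<Rightarrow> nat \<Rightarrow> real). \<forall>i<n'. b i = (\<Sum>k<K. bb k i)}"
  then obtain K :: nat and bb :: "nat \<Rightarrow> nat \<Rightarrow> real" where y: "y = (\<Sum>k<K. Phi_n TYPE('a) n' (bb k))" and dec: "\<forall>i<n'. b i = (\<Sum>k<K. bb k i)"
    by blast
  have "XL_n TYPE('a) n b \<le> (\<Sum>k<K. Phi_n TYPE('a) n (bb k))"
    unfolding XL_n_def using dec assms(2) by (intro Inf_lower) auto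
  also have "\<dots> \<le> y" unfolding y by (intro sum_mono Phi_mono_n[OF B assms(2)])
  finally show "XL_n TYPE('a) n b \<le> y" .
qed


lemma part_i:
  assumes B: "banach_lattice TYPE('a::{banach, ordered_real_vector, lattice})"
    and ID: "infinite_dimensional TYPE('a)"
    and ds: "disj_supported m u" and uX: "\<forall>k<m. u k \<in> XU TYPE('a)"
  shows "XU_norm TYPE('a) (\<lambda>i. \<Sum>k<m. u k i)
          \<le> XU_norm TYPE('a) (\<lambda>i. \<Sum>k<m. real_of_ereal (XU_norm TYPE('a) (u k)) * unit_vec k i)"
proof -
  define c where "c k = real_of_ereal (XU_norm TYPE('a) (u k))" for k
  define a where "a = (\<lambda>i. \<Sum>k<m. u k i)"
  define dd where "dd = (\<lambda>i. \<Sum>k<m. c k * unit_vec k i)"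
  have cE: "ereal (c k) = XU_norm TYPE('a) (u k)" if "k < m" for k
  proof -
    have "XU_norm TYPE('a) (u k) < \<infinity>" using uX that unfolding XU_def by blast
    moreover have "0 \<le> XU_norm TYPE('a) (u k)" by (rule XU_norm_nonneg)
    ultimately show ?thesis unfolding c_def by (cases "XU_norm TYPE('a) (u k)") auto
  qed
  have c0: "0 \<le> c k" for k unfolding c_def by (rule real_of_ereal_pos[OF XU_norm_nonneg])
  have dd_eq: "dd i = c i" if "i < m" for i
    unfolding dd_def unit_vec_def using that by (simp add: if_distrib cong: if_cong)
  have main: "XU_n TYPE('a) n a \<le> XU_norm TYPE('a) dd" for n
    unfolding XU_n_def
  proof (rule SUP_least)
    fix x :: "nat \<Rightarrow> 'a" assume "x \<in> disj_tuples TYPE('a) n"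
    then have dx: "dfam {..<n} x" by (simp add: dt_iff)
    have px: "pdisj {..<n} x" using dx by (simp add: dfam_def)
    define y where "y k = (\<Sum>i<n. u k i *\<^sub>R x i)" for k
    have sum_eq: "(\<Sum>i<n. a i *\<^sub>R x i) = (\<Sum>k<m. y k)"
      unfolding a_def y_def scaleR_sum_left by (rule sum.swap)
    have ny: "norm (y k) \<le> c k" if "k < m" for k
    proof -
      have "ereal (norm (y k)) \<le> XU_n TYPE('a) n (u k)" unfolding y_def by (rule XU_n_ge[OF dx])
      also have "\<dots> \<le> XU_norm TYPE('a) (u k)" unfolding XU_norm_def by (rule SUP_upper) simp
      also have "\<dots> = ereal (c k)" using cE[OF that] by simp
      finally show ?thesis by simp
    qed
    have pdy: "pdisj {..<m} y"
      unfolding pdisj_def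
    proof (intro ballI impI)
      fix k k' assume kk: "k \<in> {..<m}" "k' \<in> {..<m}" "k \<noteq> k'"
      have "\<forall>i\<in>{..<n}. u k i = 0 \<or> u k' i = 0" using ds kk unfolding disj_supported_def by blast
      then show "lat_disjoint (y k) (y k')" unfolding y_def by (rule disj_sums[OF px finite_lessThan])
    qed
    define S where "S = {k\<in>{..<m}. y k \<noteq> 0}"
    define z where "z k = (1 / norm (y k)) *\<^sub>R y k" for k
    have Sm: "S \<subseteq> {..<m}" unfolding S_def by blast
    have fS: "finite S" using Sm finite_subset by blast
    have dz: "dfam S z"
      unfolding dfam_def pdisj_def
    proof (intro conjI ballI impI)
      fix k assume "k \<in> S" then show "norm (z k) = 1" unfolding S_def z_def by simp
    next
      fix k k' assume kk: "k \<in> S" "k' \<in> S" "k \<noteq> k'"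
      then have "lat_disjoint (y k) (y k')" using pdy Sm unfolding pdisj_def by blast
      then have "lat_disjoint (z k) (y k')" unfolding z_def by (rule lat_disjoint_scale)
      then have "lat_disjoint (y k') (z k)" by (simp only: lat_disjoint_sym)
      then have "lat_disjoint (z k') (z k)" unfolding z_def by (rule lat_disjoint_scale)
      then show "lat_disjoint (z k) (z k')" by (simp only: lat_disjoint_sym)
    qed
    have pz: "pdisj S z" using dz by (simp add: dfam_def)
    have "(\<Sum>k<m. y k) = (\<Sum>k\<in>S. y k)"
      by (rule sum.mono_neutral_right[OF finite_lessThan Sm]) (simp add: S_def)
    also have "\<dots> = (\<Sum>k\<in>S. norm (y k) *\<^sub>R z k)"
      by (rule sum.cong) (simp_all add: S_def z_def)
    finally have yS: "(\<Sum>k<m. y k) = (\<Sum>k\<in>S. norm (y k) *\<^sub>R z k)" .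
    have le1: "norm (\<Sum>i<n. a i *\<^sub>R x i) \<le> norm (\<Sum>k\<in>S. c k *\<^sub>R z k)"
      unfolding sum_eq yS
    proof (rule bl_norm_sum_mono[OF B fS pz])
      fix k assume "k \<in> S"
      then show "\<bar>norm (y k)\<bar> \<le> \<bar>c k\<bar>" using ny Sm c0 by auto
    qed
    show "ereal (norm (\<Sum>i<n. a i *\<^sub>R x i)) \<le> XU_norm TYPE('a) dd"
    proof (rule ereal_le_epsilon2)
      fix ep :: real assume ep: "0 < ep"
      obtain w :: "nat \<Rightarrow> 'a" where w: "dfam {..<m} w"
        "\<bar>norm (\<Sum>k\<in>S. c k *\<^sub>R w k) - norm (\<Sum>k\<in>S. c k *\<^sub>R z k)\<bar> \<le> ep"
        using ext_to_M[OF B ID Sm dz subset_refl ep, of c] by blast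
      have "norm (\<Sum>k\<in>S. c k *\<^sub>R w k) \<le> norm (\<Sum>k<m. c k *\<^sub>R w k)"
        by (rule subsum_norm[OF B finite_lessThan Sm]) (use w(1) in \<open>simp add: dfam_def\<close>)
      also have "(\<Sum>k<m. c k *\<^sub>R w k) = (\<Sum>i<m. dd i *\<^sub>R w i)"
        by (rule sum.cong) (simp_all add: dd_eq)
      finally have le2: "norm (\<Sum>k\<in>S. c k *\<^sub>R w k) \<le> norm (\<Sum>i<m. dd i *\<^sub>R w i)" .
      have le3: "ereal (norm (\<Sum>i<m. dd i *\<^sub>R w i)) \<le> XU_norm TYPE('a) dd"
      proof -
        have "ereal (norm (\<Sum>i<m. dd i *\<^sub>R w i)) \<le> XU_n TYPE('a) m dd" by (rule XU_n_ge[OF w(1)])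
        also have "\<dots> \<le> XU_norm TYPE('a) dd" unfolding XU_norm_def by (rule SUP_upper) simp
        finally show ?thesis .
      qed
      have "norm (\<Sum>i<n. a i *\<^sub>R x i) \<le> norm (\<Sum>i<m. dd i *\<^sub>R w i) + ep"
        using le1 le2 w(2) by linarith
      then have "ereal (norm (\<Sum>i<n. a i *\<^sub>R x i)) \<le> ereal (norm (\<Sum>i<m. dd i *\<^sub>R w i)) + ereal ep"
        by simp
      also have "\<dots> \<le> XU_norm TYPE('a) dd + ereal ep" using le3 by (rule add_right_mono)
      finally show "ereal (norm (\<Sum>i<n. a i *\<^sub>R x i)) \<le> XU_norm TYPE('a) dd + ereal ep" .
    qed
  qed
  have "XU_norm TYPE('a) a \<le> XU_norm TYPE('a) dd"
    unfolding XU_norm_def[of _ a] using main by (rule SUP_least)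
  then show ?thesis unfolding a_def dd_def c_def .
qed


lemma sum_single:
  assumes "finite A" "k \<in> A" "\<forall>k'\<in>A. k' \<noteq> k \<longrightarrow> g k' = 0"
  shows "sum g A = g k"
proof -
  have "sum g A = g k + sum g (A - {k})" by (rule sum.remove[OF assms(1,2)])
  also have "sum g (A - {k}) = 0" using assms(3) by (intro sum.neutral) blast
  finally show ?thesis by simp
qed

lemma Phi_mono_coef:
  assumes B: "banach_lattice TYPE('a::{banach, ordered_real_vector, lattice})"
    and le: "\<forall>i<n. \<bar>b' i\<bar> \<le> \<bar>b i\<bar>"
  shows "Phi_n TYPE('a) n b' \<le> Phi_n TYPE('a) n b"
  unfolding Phi_n_def
proof (rule INF_mono)
  fix x assume x: "x \<in> disj_tuples TYPE('a) n"
  have "norm (\<Sum>i<n. b' i *\<^sub>R x i) \<le> norm (\<Sum>i<n. b i *\<^sub>R x i)"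
    using x le by (intro bl_norm_sum_mono[OF B finite_lessThan]) (auto simp: dt_iff dfam_def)
  then show "\<exists>x'\<in>disj_tuples TYPE('a) n. ereal (norm (\<Sum>i<n. b' i *\<^sub>R x' i)) \<le> ereal (norm (\<Sum>i<n. b i *\<^sub>R x i))"
    using x by auto
qed

lemma XL_le_dec:
  fixes K :: nat and b :: "nat \<Rightarrow> nat \<Rightarrow> real"
  assumes "\<forall>i<n. a i = (\<Sum>k<K. b k i)"
  shows "XL_n TYPE('a::{banach, ordered_real_vector, lattice}) n a \<le> (\<Sum>k<K. Phi_n TYPE('a) n (b k))"
  unfolding XL_n_def using assms by (intro Inf_lower) blast

lemma ereal_fin:
  fixes X :: ereal
  assumes "0 \<le> X" "X \<noteq> \<infinity>"
  shows "ereal (real_of_ereal X) = X"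
  using assms by (cases X) auto


lemma part_ii:
  assumes B: "banach_lattice TYPE('a::{banach, ordered_real_vector, lattice})"
    and ID: "infinite_dimensional TYPE('a)"
    and ds: "disj_supported m u" and uX: "\<forall>k<m. u k \<in> XL TYPE('a)"
  shows "XL_norm TYPE('a) (\<lambda>i. \<Sum>k<m. real_of_ereal (XL_norm TYPE('a) (u k)) * unit_vec k i)
          \<le> XL_norm TYPE('a) (\<lambda>i. \<Sum>k<m. u k i)"
proof -
  define c where "c k = real_of_ereal (XL_norm TYPE('a) (u k))" for k
  define a where "a = (\<lambda>i. \<Sum>k<m. u k i)"
  define dd where "dd = (\<lambda>i. \<Sum>k<m. c k * unit_vec k i)"
  have cE: "ereal (c k) = XL_norm TYPE('a) (u k)" if "k < m" for k
  proof -
    have "XL_norm TYPE('a) (u k) < \<infinity>" using uX that unfolding XL_def by blast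
    then show ?thesis unfolding c_def by (intro ereal_fin XL_norm_nonneg) simp
  qed
  have c0: "0 \<le> c k" for k unfolding c_def by (rule real_of_ereal_pos[OF XL_norm_nonneg])
  have dd_eq: "dd i = (if i < m then c i else 0)" for i
    unfolding dd_def unit_vec_def by (simp add: if_distrib cong: if_cong)
  have dd0: "0 \<le> dd i" for i unfolding dd_eq using c0 by simp
  have a_eq: "a i = u k i" if "k < m" "u k i \<noteq> 0" for k i
    unfolding a_def
    by (rule sum_single) (use ds that in \<open>auto simp: disj_supported_def\<close>)
  have "XL_norm TYPE('a) dd \<le> XL_norm TYPE('a) a"
  proof (cases "XL_norm TYPE('a) a = \<infinity>")
    case True then show ?thesis by simp
  next
    case False
    define A where "A = real_of_ereal (XL_norm TYPE('a) a)"
    have AE: "ereal A = XL_norm TYPE('a) a" unfolding A_def using False by (intro ereal_fin XL_norm_nonneg)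
    have mainM: "XL_n TYPE('a) M dd \<le> XL_norm TYPE('a) a" for M
    proof (rule ereal_le_epsilon2)
      fix ep :: real assume ep: "0 < ep"
      define e where "e = ep / (real m + 3)"
      have e0: "0 < e" unfolding e_def using ep by simp
      have ep_eq: "ep = (real m + 3) * e" unfolding e_def by simp
      have "\<exists>Nk. ereal (c k) - ereal e < XL_n TYPE('a) Nk (u k)" if "k < m" for k
      proof -
        have "ereal (c k) - ereal e < ereal (c k)" using e0 by simp
        also have "\<dots> = (SUP n. XL_n TYPE('a) n (u k))" using cE[OF that] unfolding XL_norm_def by simp
        finally show ?thesis by (simp add: less_SUP_iff)
      qed
      then have "\<forall>k\<in>{..<m}. \<exists>Nk. ereal (c k) - ereal e < XL_n TYPE('a) Nk (u k)" by blast
      from bchoice[OF this] obtain Nf where Nf: "\<forall>k\<in>{..<m}. ereal (c k) - ereal e < XL_n TYPE('a) (Nf k) (u k)"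
        by blast
      define N where "N = (\<Sum>k<m. Nf k)"
      have NNf: "Nf k \<le> N" if "k < m" for k
        unfolding N_def using that by (intro member_le_sum) auto
      have cN: "ereal (c k) - ereal e < XL_n TYPE('a) N (u k)" if "k < m" for k
        using Nf that XL_mono_n[OF B NNf[OF that], of "u k"] by (meson lessThan_iff order_less_le_trans)
      have XNa: "XL_n TYPE('a) N a \<le> ereal A"
        unfolding AE XL_norm_def by (rule SUP_upper) simp
      have XNa0: "0 \<le> XL_n TYPE('a) N a" by (rule XL_n_nonneg)
      have "XL_n TYPE('a) N a < XL_n TYPE('a) N a + ereal e"
        using XNa XNa0 e0 by (cases "XL_n TYPE('a) N a") auto
      then obtain K :: nat and b :: "nat \<Rightarrow> nat \<Rightarrow> real" where
        bdec: "\<forall>i<N. a i = (\<Sum>j<K. b j i)" and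
        bsum: "(\<Sum>j<K. Phi_n TYPE('a) N (b j)) < XL_n TYPE('a) N a + ereal e"
        unfolding XL_n_def[of _ N a] Inf_less_iff by blast
      define e' where "e' = e / (real K + 1)"
      have e'0: "0 < e'" unfolding e'_def using e0 by simp
      have Ke': "real K * e' \<le> e" unfolding e'_def using e0 by (simp add: field_simps)
      obtain x0 :: "nat \<Rightarrow> 'a" where x0: "dfam {..<N} x0" using exists_dfam[OF B ID] by blast
      have Phifin: "Phi_n TYPE('a) N (b j) \<noteq> \<infinity>" for j
        using Phi_n_le[OF x0, of "b j"] by auto
      define phi where "phi j = real_of_ereal (Phi_n TYPE('a) N (b j))" for j
      have phiE: "ereal (phi j) = Phi_n TYPE('a) N (b j)" for j
        unfolding phi_def by (intro ereal_fin Phi_n_nonneg Phifin)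
      have "\<exists>x::nat \<Rightarrow> 'a. dfam {..<N} x \<and> norm (\<Sum>i<N. b j i *\<^sub>R x i) < phi j + e'" for j
      proof -
        have "ereal (phi j) < ereal (phi j + e')" using e'0 by simp
        then have "Phi_n TYPE('a) N (b j) < ereal (phi j + e')" using phiE[of j] by simp
        then obtain x where "x \<in> disj_tuples TYPE('a) N" "ereal (norm (\<Sum>i<N. b j i *\<^sub>R x i)) < ereal (phi j + e')"
          unfolding Phi_n_def INF_less_iff by blast
        then show ?thesis by (auto simp: dt_iff)
      qed
      then have "\<forall>j\<in>UNIV. \<exists>x::nat \<Rightarrow> 'a. dfam {..<N} x \<and> norm (\<Sum>i<N. b j i *\<^sub>R x i) < phi j + e'" by blast
      from bchoice[OF this] obtain xs :: "nat \<Rightarrow> nat \<Rightarrow> 'a"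
        where xs: "\<And>j. dfam {..<N} (xs j)" "\<And>j. norm (\<Sum>i<N. b j i *\<^sub>R xs j i) < phi j + e'" by blast
      define nb where "nb j = norm (\<Sum>i<N. b j i *\<^sub>R xs j i)" for j
      have sphi: "(\<Sum>j<K. phi j) < A + e"
      proof -
        have "ereal (\<Sum>j<K. phi j) = (\<Sum>j<K. Phi_n TYPE('a) N (b j))" using phiE by (simp add: sum_ereal[symmetric])
        also have "\<dots> < XL_n TYPE('a) N a + ereal e" by (rule bsum)
        also have "\<dots> \<le> ereal A + ereal e" using XNa by (rule add_right_mono)
        finally show ?thesis by simp
      qed
      \<comment> \<open>Step 4: splitting according to supports\<close>
      define beta where "beta j k i = (if u k i \<noteq> 0 then b j i else 0)" for j k i
      define y where "y j k = (\<Sum>i<N. beta j k i *\<^sub>R xs j i)" for j k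
      define C where "C j k = (if k < m then norm (y j k) else 0)" for j k
      have C0: "0 \<le> C j k" for j k unfolding C_def by simp
      have sumC: "c k - e < (\<Sum>j<K. C j k)" if "k < m" for k
      proof -
        have dec: "\<forall>i<N. u k i = (\<Sum>j<K. beta j k i)"
        proof (intro allI impI)
          fix i assume "i < N"
          show "u k i = (\<Sum>j<K. beta j k i)"
          proof (cases "u k i = 0")
            case True then show ?thesis unfolding beta_def by simp
          next
            case False
            then have "(\<Sum>j<K. beta j k i) = a i" unfolding beta_def using bdec \<open>i < N\<close> by simp
            then show ?thesis using a_eq[OF that False] by simp
          qed
        qed
        have "XL_n TYPE('a) N (u k) \<le> (\<Sum>j<K. Phi_n TYPE('a) N (\<lambda>i. beta j k i))"
          by (rule XL_le_dec[OF dec])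
        also have "\<dots> \<le> (\<Sum>j<K. ereal (C j k))"
        proof (rule sum_mono)
          fix j show "Phi_n TYPE('a) N (\<lambda>i. beta j k i) \<le> ereal (C j k)"
            unfolding C_def y_def using that Phi_n_le[OF xs(1)[of j], of "\<lambda>i. beta j k i"] by simp
        qed
        also have "\<dots> = ereal (\<Sum>j<K. C j k)" by (simp add: sum_ereal)
        finally have h: "XL_n TYPE('a) N (u k) \<le> ereal (\<Sum>j<K. C j k)" .
        have "ereal (c k) - ereal e < ereal (\<Sum>j<K. C j k)" using cN[OF that] h by (rule order_less_le_trans)
        then show ?thesis by simp
      qed
      have PhiC: "Phi_n TYPE('a) M (C j) \<le> ereal (nb j + e')" for j
      proof -
        have px: "pdisj {..<N} (xs j)" using xs(1)[of j] by (simp add: dfam_def)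
        have pdy: "pdisj {..<m} (y j)"
          unfolding pdisj_def
        proof (intro ballI impI)
          fix k k' assume kk: "k \<in> {..<m}" "k' \<in> {..<m}" "k \<noteq> k'"
          have "\<forall>i\<in>{..<N}. beta j k i = 0 \<or> beta j k' i = 0"
            using ds kk unfolding disj_supported_def beta_def by auto
          then show "lat_disjoint (y j k) (y j k')" unfolding y_def by (rule disj_sums[OF px finite_lessThan])
        qed
        define S where "S = {k\<in>{..<m}. y j k \<noteq> 0}"
        define z where "z k = (1 / norm (y j k)) *\<^sub>R y j k" for k
        have Sm: "S \<subseteq> {..<m}" unfolding S_def by blast
        have dz: "dfam S z"
          unfolding dfam_def pdisj_def
        proof (intro conjI ballI impI)
          fix k assume "k \<in> S" then show "norm (z k) = 1" unfolding S_def z_def by simp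
        next
          fix k k' assume kk: "k \<in> S" "k' \<in> S" "k \<noteq> k'"
          then have "lat_disjoint (y j k) (y j k')" using pdy Sm unfolding pdisj_def by blast
          then have "lat_disjoint (z k) (y j k')" unfolding z_def by (rule lat_disjoint_scale)
          then have "lat_disjoint (y j k') (z k)" by (simp only: lat_disjoint_sym)
          then have "lat_disjoint (z k') (z k)" unfolding z_def by (rule lat_disjoint_scale)
          then show "lat_disjoint (z k) (z k')" by (simp only: lat_disjoint_sym)
        qed
        define Mx where "Mx = max M m"
        have SMx: "S \<subseteq> {..<Mx}" using Sm unfolding Mx_def by auto
        obtain w :: "nat \<Rightarrow> 'a" where w: "dfam {..<Mx} w"
          "\<bar>norm (\<Sum>k\<in>S. C j k *\<^sub>R w k) - norm (\<Sum>k\<in>S. C j k *\<^sub>R z k)\<bar> \<le> e'"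
          using ext_to_M[OF B ID SMx dz subset_refl e'0, of "C j"] by blast
        have pw: "pdisj {..<Mx} w" using w(1) by (simp add: dfam_def)
        have "(\<Sum>k\<in>S. C j k *\<^sub>R z k) = (\<Sum>k\<in>S. y j k)"
          by (rule sum.cong) (use Sm in \<open>auto simp: S_def z_def C_def\<close>)
        also have "\<dots> = (\<Sum>k<m. y j k)"
          by (rule sum.mono_neutral_right[OF finite_lessThan Sm, symmetric]) (simp add: S_def)
        also have "\<dots> = (\<Sum>i<N. (\<Sum>k<m. beta j k i) *\<^sub>R xs j i)"
          unfolding y_def scaleR_sum_left by (rule sum.swap)
        finally have zsum: "(\<Sum>k\<in>S. C j k *\<^sub>R z k) = (\<Sum>i<N. (\<Sum>k<m. beta j k i) *\<^sub>R xs j i)" .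
        have "norm (\<Sum>i<N. (\<Sum>k<m. beta j k i) *\<^sub>R xs j i) \<le> nb j"
          unfolding nb_def
        proof (rule bl_norm_sum_mono[OF B finite_lessThan px])
          fix i assume "i \<in> {..<N}"
          show "\<bar>\<Sum>k<m. beta j k i\<bar> \<le> \<bar>b j i\<bar>"
          proof (cases "\<exists>k<m. u k i \<noteq> 0")
            case True
            then obtain k0 where k0: "k0 < m" "u k0 i \<noteq> 0" by blast
            have "(\<Sum>k<m. beta j k i) = beta j k0 i"
              by (rule sum_single) (use ds k0 in \<open>auto simp: disj_supported_def beta_def\<close>)
            then show ?thesis unfolding beta_def using k0 by simp
          next
            case False then have "(\<Sum>k<m. beta j k i) = 0" unfolding beta_def by simp
            then show ?thesis by simp
          qed
        qed
        then have n1: "norm (\<Sum>k\<in>S. C j k *\<^sub>R w k) \<le> nb j + e'" using w(2)[unfolded zsum] by linarith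
        have "(\<Sum>i<Mx. C j i *\<^sub>R w i) = (\<Sum>i\<in>S. C j i *\<^sub>R w i)"
          by (rule sum.mono_neutral_right[OF finite_lessThan SMx]) (auto simp: S_def C_def)
        moreover have "norm (\<Sum>i<M. C j i *\<^sub>R w i) \<le> norm (\<Sum>i<Mx. C j i *\<^sub>R w i)"
          by (rule subsum_norm[OF B finite_lessThan _ pw]) (auto simp: Mx_def)
        moreover have "dfam {..<M} w" using w(1) dfam_subset[of "{..<Mx}" w "{..<M}"] unfolding Mx_def by auto
        then have "Phi_n TYPE('a) M (C j) \<le> ereal (norm (\<Sum>i<M. C j i *\<^sub>R w i))" by (rule Phi_n_le)
        ultimately show ?thesis using n1 by (smt (verit) ereal_less_eq(3) order_trans)
      qed
      define D where "D i = (\<Sum>j<K. C j i) + (if i < m then e else 0)" for i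
      have D0: "0 \<le> D i" for i unfolding D_def using C0 e0 by (intro add_nonneg_nonneg sum_nonneg) auto
      have ddD: "dd i \<le> D i" for i
      proof (cases "i < m")
        case True then show ?thesis unfolding dd_eq D_def using sumC[OF True] by simp
      next
        case False then show ?thesis unfolding dd_eq D_def using C0 by (simp add: sum_nonneg)
      qed
      define lam where "lam i = (if D i = 0 then 0 else dd i / D i)" for i
      have lam: "0 \<le> lam i" "lam i \<le> 1" for i
        unfolding lam_def using dd0[of i] ddD[of i] D0[of i] by (auto simp: divide_le_eq_1)
      have lamD: "lam i * D i = dd i" for i
        unfolding lam_def using dd0[of i] ddD[of i] by auto
      define P where "P p = (if p < K then (\<lambda>i. lam i * C p i) else (\<lambda>i. lam i * (if i < m then e else 0)))" for p
      have Pdec: "\<forall>i<M. dd i = (\<Sum>p<Suc K. P p i)"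
      proof (intro allI impI)
        fix i
        have "(\<Sum>p<Suc K. P p i) = (\<Sum>p<K. lam i * C p i) + lam i * (if i < m then e else 0)"
          unfolding P_def by simp
        also have "\<dots> = lam i * D i" unfolding D_def by (simp add: sum_distrib_left distrib_left)
        finally show "dd i = (\<Sum>p<Suc K. P p i)" using lamD[of i] by simp
      qed
      have PK: "Phi_n TYPE('a) M (P K) \<le> ereal (real m * e)"
      proof -
        obtain w0 :: "nat \<Rightarrow> 'a" where w0: "dfam {..<M} w0" using exists_dfam[OF B ID] by blast
        have "norm (\<Sum>i<M. P K i *\<^sub>R w0 i) \<le> (\<Sum>i<M. norm (P K i *\<^sub>R w0 i))" by (rule norm_sum)
        also have "\<dots> = (\<Sum>i<M. \<bar>P K i\<bar>)"
          by (rule sum.cong) (use w0 in \<open>auto simp: dfam_def\<close>)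
        also have "\<dots> \<le> (\<Sum>i<M. if i < m then e else 0)"
          unfolding P_def using lam e0 by (intro sum_mono) (auto simp: abs_mult mult_le_cancel_right1)
        also have "\<dots> = (\<Sum>i\<in>{..<M} \<inter> {..<m}. e)"
          using sum.inter_restrict[OF finite_lessThan, of "\<lambda>i. e" M "{..<m}"] by simp
        also have "\<dots> = real (card ({..<M} \<inter> {..<m})) * e" by (rule sum_constant)
        also have "\<dots> \<le> real m * e"
        proof -
          have "card ({..<M} \<inter> {..<m}) \<le> card {..<m}" by (rule card_mono) auto
          then show ?thesis using e0 by simp
        qed
        finally have "norm (\<Sum>i<M. P K i *\<^sub>R w0 i) \<le> real m * e" .
        then show ?thesis using Phi_n_le[OF w0, of "P K"] by (meson ereal_less_eq(3) order_trans)
      qed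
      have Pj: "Phi_n TYPE('a) M (P p) \<le> ereal (nb p + e')" if "p < K" for p
      proof -
        have "Phi_n TYPE('a) M (P p) \<le> Phi_n TYPE('a) M (C p)"
        proof (rule Phi_mono_coef[OF B], intro allI impI)
          fix i
          have "P p i = lam i * C p i" using that unfolding P_def by simp
          moreover have "lam i * C p i \<le> C p i" by (rule mult_left_le_one_le[OF C0 lam(1) lam(2)])
          moreover have "0 \<le> lam i * C p i" using lam(1)[of i] C0[of p i] by simp
          ultimately show "\<bar>P p i\<bar> \<le> \<bar>C p i\<bar>" using C0[of p i] by simp
        qed
        also have "\<dots> \<le> ereal (nb p + e')" by (rule PhiC)
        finally show ?thesis .
      qed
      have "XL_n TYPE('a) M dd \<le> (\<Sum>p<Suc K. Phi_n TYPE('a) M (P p))" by (rule XL_le_dec[OF Pdec])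
      also have "\<dots> = (\<Sum>p<K. Phi_n TYPE('a) M (P p)) + Phi_n TYPE('a) M (P K)" by simp
      also have "\<dots> \<le> (\<Sum>p<K. ereal (nb p + e')) + ereal (real m * e)"
        using Pj PK by (intro add_mono sum_mono) auto
      also have "\<dots> = ereal ((\<Sum>p<K. (nb p + e')) + real m * e)" by (simp add: sum_ereal)
      also have "\<dots> \<le> ereal (A + ep)"
      proof -
        have "(\<Sum>p<K. (nb p + e')) \<le> (\<Sum>p<K. (phi p + e' + e'))"
        proof (rule sum_mono)
          fix p show "nb p + e' \<le> phi p + e' + e'" using xs(2)[of p] unfolding nb_def by linarith
        qed
        also have "\<dots> = (\<Sum>p<K. phi p) + real K * e' + real K * e'" by (simp add: sum.distrib)
        finally have "(\<Sum>p<K. (nb p + e')) \<le> (\<Sum>p<K. phi p) + real K * e' + real K * e'" .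
        then have "(\<Sum>p<K. (nb p + e')) + real m * e \<le> A + ep"
          using sphi Ke' unfolding ep_eq by (simp add: algebra_simps)
        then show ?thesis by simp
      qed
      also have "\<dots> = XL_norm TYPE('a) a + ereal ep" unfolding AE[symmetric] by simp
      finally show "XL_n TYPE('a) M dd \<le> XL_norm TYPE('a) a + ereal ep" .
    qed
    show ?thesis unfolding XL_norm_def[of _ dd] using mainM by (rule SUP_least)
  qed
  then show ?thesis unfolding a_def dd_def c_def .
qed


theorem mainTheorem6:
  assumes "banach_lattice TYPE('a::{banach, ordered_real_vector, lattice})"
    and "infinite_dimensional TYPE('a)"
  shows "(\<forall>(m::nat) (u::nat \<Rightarrow> nat \<Rightarrow> real).
            disj_supported m u \<and> (\<forall>k<m. u k \<in> XU TYPE('a)) \<longrightarrow>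
            XU_norm TYPE('a) (\<lambda>i. \<Sum>k<m. u k i)
              \<le> XU_norm TYPE('a) (\<lambda>i. \<Sum>k<m. real_of_ereal (XU_norm TYPE('a) (u k)) * unit_vec k i))
       \<and> (\<forall>(m::nat) (u::nat \<Rightarrow> nat \<Rightarrow> real).
            disj_supported m u \<and> (\<forall>k<m. u k \<in> XL TYPE('a)) \<longrightarrow>
            XL_norm TYPE('a) (\<lambda>i. \<Sum>k<m. real_of_ereal (XL_norm TYPE('a) (u k)) * unit_vec k i)
              \<le> XL_norm TYPE('a) (\<lambda>i. \<Sum>k<m. u k i))"
proof (intro conjI allI impI)
  fix m :: nat and u :: "nat \<Rightarrow> nat \<Rightarrow> real"
  assume h: "disj_supported m u \<and> (\<forall>k<m. u k \<in> XU TYPE('a))"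
  show "XU_norm TYPE('a) (\<lambda>i. \<Sum>k<m. u k i)
              \<le> XU_norm TYPE('a) (\<lambda>i. \<Sum>k<m. real_of_ereal (XU_norm TYPE('a) (u k)) * unit_vec k i)"
    using part_i[OF assms(1,2) conjunct1[OF h] conjunct2[OF h]] .
next
  fix m :: nat and u :: "nat \<Rightarrow> nat \<Rightarrow> real"
  assume h: "disj_supported m u \<and> (\<forall>k<m. u k \<in> XL TYPE('a))"
  show "XL_norm TYPE('a) (\<lambda>i. \<Sum>k<m. real_of_ereal (XL_norm TYPE('a) (u k)) * unit_vec k i)
              \<le> XL_norm TYPE('a) (\<lambda>i. \<Sum>k<m. u k i)"
    using part_ii[OF assms(1,2) conjunct1[OF h] conjunct2[OF h]] .
qed

end
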